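(* Let $G_0^*$ be a $k$-uniform hypergraph on $n$ vertices and let $\{U_1,\dots,U_t\}$ be a partition of its vertex set into $t$ sets of size $p$ (so $n=pt$). Order the vertices of $G_0^*$ so that $U_i$ consists of the $((i-1)p+1)$-th through the $(ip)$-th vertices, and compute $S(G_0^* )$ in this order. For $i=1,\dots,t$ let $G_i^*$ be a $(k,r)$-regular hypergraph on $m\ge 2$ vertices (same $k,r,m$ for all $i$). Put $$a=\begin{cases} p\left(\binom{p+m-2}{k-2}-\binom{p-2}{k-2}\right) & \text{if } p\ge 2,\\ 0 & \text{if } p=1,\end{cases}\qquad b=\binom{p+m-2}{k-2},\qquad c=\binom{p+m-2}{k-2}-\binom{m-2}{k-2},$$ $Y_{S_i}=S(G_i^* )-2c(J_m-I_m)$, and $h=h(\mu)=-(1+2r(k-1)+2c(m-1)+\mu)$. Let $G^*=G_0^*\odot_p^t G_i^*$ be the generalized corona. Then for every real $\mu$ such that $Y_{S_i}-J_m-\mu I_m$ is invertible for every $i$, $h\neq 0$ and $h+pmt\neq 0$, $$P_{S(G^* )}(\mu)=\Big(1+\frac{pmt}{h}\Big)\Big(\prod_{i=1}^t\det(Y_{S_i}-J_m-\mu I_m)\Big)^p\det\!\Big(S(G_0^* )+I_t\otimes\Big(-\big(2a+\tfrac{4pmb^2}{h}\big)J_p+(2a-\mu)I_p\Big)-\frac{pm}{h}\Big((t-4b)-\frac{pm(t-2b)^2}{h+pmt}\Big)J_n\Big).$$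
   Context: All hypergraphs are finite and simple: a hypergraph $G^*=(V,E)$ consists of a finite vertex set $V$ and a set $E$ of subsets of $V$ (hyperedges), each of size at least $2$. It is $k$-uniform if every hyperedge has exactly $k$ elements, and $(k,r)$-regular if it is $k$-uniform and every vertex lies in exactly $r$ hyperedges. For a hypergraph with vertices $v_1,\dots,v_n$, the adjacency matrix $A(G^* )$ is the $n\times n$ matrix whose $(i,j)$ entry, for $i\ne j$, is the number of hyperedges containing both $v_i$ and $v_j$, and whose diagonal entries are $0$; the Seidel matrix is $S(G^* )=J_n-I_n-2A(G^* )$. $J_n$ (resp. $J_{a,b}$) is the all-ones $n\times n$ (resp. $a\times b$) matrix, $I_n$ the identity matrix, $\otimes$ the Kronecker product. For a square matrix $M$, $P_M(\mu)=\det(M-\mu I)$. Binomial coefficients $\binom{x}{y}$ with integers $x\ge 0$ and $y$ are $0$ when $y<0$ or $y>x$. Generalized corona: let $G_0^*$ be a $k$-uniform hypergraph with vertex set $V_0$, $\{U_1,\dots,U_t\}$ a partition of $V_0$ with $|U_i|=p$, and $G_1^*,\dots,G_t^*$ $k$-uniform hypergraphs. The generalized corona $G_0^*\odot_p^t G_i^*$ is the $k$-uniform hypergraph obtained as follows: for each $i$ take $p$ copies $G_i^{*(1)},\dots,G_i^{*(p)}$ of $G_i^*$, all copies pairwise vertex-disjoint and disjoint from $V_0$. The vertex set is $V_0$ together with the vertices of all copies; the hyperedges are the hyperedges of $G_0^*$, the hyperedges of every copy, and, for every $i\in\{1,\dots,t\}$ and $j\in\{1,\dots,p\}$, every $k$-element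 subset of $U_i\cup V(G_i^{*(j)})$ that meets both $U_i$ and $V(G_i^{*(j)})$. *)

theory Defs
  imports "Jordan_Normal_Form.Determinant"
begin

definition hypergraph :: "nat \<Rightarrow> nat set set \<Rightarrow> bool" where
  "hypergraph n E \<longleftrightarrow> (\<forall>e\<in>E. e \<subseteq> {..<n} \<and> 2 \<le> card e)"

definition uniform_hg :: "nat \<Rightarrow> nat \<Rightarrow> nat set set \<Rightarrow> bool" where
  "uniform_hg k n E \<longleftrightarrow> hypergraph n E \<and> (\<forall>e\<in>E. card e = k)"

definition regular_hg :: "nat \<Rightarrow> nat \<Rightarrow> nat \<Rightarrow> nat set set \<Rightarrow> bool" where
  "regular_hg k r n E \<longleftrightarrow> uniform_hg k n E \<and> (\<forall>v<n. card {e\<in>E. v \<in> e} = r)"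

definition ones_mat :: "nat \<Rightarrow> nat \<Rightarrow> real mat" where
  "ones_mat a b = mat a b (\<lambda>_. 1)"

definition adj_mat :: "nat \<Rightarrow> nat set set \<Rightarrow> real mat" where
  "adj_mat n E = mat n n (\<lambda>(i,j). if i = j then 0 else real (card {e\<in>E. i \<in> e \<and> j \<in> e}))"

definition seidel_mat :: "nat \<Rightarrow> nat set set \<Rightarrow> real mat" where
  "seidel_mat n E = ones_mat n n - 1\<^sub>m n - 2 \<cdot>\<^sub>m adj_mat n E"

definition charP :: "real mat \<Rightarrow> real \<Rightarrow> real" where
  "charP M \<mu> = det (M - \<mu> \<cdot>\<^sub>m 1\<^sub>m (dim_row M))"

definition kron :: "real mat \<Rightarrow> real mat \<Rightarrow> real mat" where
  "kron A B = mat (dim_row A * dim_row B) (dim_col A * dim_col B)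
     (\<lambda>(i,j). A $$ (i div dim_row B, j div dim_col B) * B $$ (i mod dim_row B, j mod dim_col B))"

definition binom :: "nat \<Rightarrow> int \<Rightarrow> nat" where
  "binom x y = (if y < 0 then 0 else x choose (nat y))"

text \<open>Generalized corona with concrete labelling: G0 lives on {0..<p*t}, the part U_i
  (i < t) is {i*p..<(i+1)*p}; the j-th copy (j < p) of G_i (on {0..<m}) uses the
  vertices p*t + (i*p+j)*m + v, v < m.\<close>
definition part :: "nat \<Rightarrow> nat \<Rightarrow> nat set" where
  "part p i = {i*p..<(i+1)*p}"

definition copy_vtx :: "nat \<Rightarrow> nat \<Rightarrow> nat \<Rightarrow> nat \<Rightarrow> nat \<Rightarrow> nat \<Rightarrow> nat" where
  "copy_vtx p t m i j v = p*t + (i*p + j)*m + v"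

definition copy_set :: "nat \<Rightarrow> nat \<Rightarrow> nat \<Rightarrow> nat \<Rightarrow> nat \<Rightarrow> nat set" where
  "copy_set p t m i j = copy_vtx p t m i j ` {..<m}"

definition corona_edges ::
  "nat \<Rightarrow> nat \<Rightarrow> nat \<Rightarrow> nat \<Rightarrow> nat set set \<Rightarrow> (nat \<Rightarrow> nat set set) \<Rightarrow> nat set set" where
  "corona_edges k p t m E0 Gs =
     E0
     \<union> (\<Union>i<t. \<Union>j<p. (\<lambda>e. copy_vtx p t m i j ` e) ` Gs i)
     \<union> (\<Union>i<t. \<Union>j<p. {e. e \<subseteq> part p i \<union> copy_set p t m i j \<and> card e = k
                          \<and> e \<inter> part p i \<noteq> {} \<and> e \<inter> copy_set p t m i j \<noteq> {}})"

definition corona_size :: "nat \<Rightarrow> nat \<Rightarrow> nat \<Rightarrow> nat" where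
  "corona_size p t m = p*t + p*t*m"

end

theory Submission
  imports Defs
begin


lemma sum_split_blocks:
  fixes f :: "nat \<Rightarrow> 'a::comm_monoid_add"
  shows "sum f {..<q*t} = (\<Sum>i<t. \<Sum>v<q. f (i*q+v))"
proof (induction t)
  case 0 then show ?case by simp
next
  case (Suc t)
  have "{..<q*Suc t} = {..<q*t} \<union> {q*t..<q*t+q}" by auto
  moreover have "sum f {q*t..<q*t+q} = (\<Sum>v<q. f (t*q+v))"
    using sum.shift_bounds_nat_ivl[of f 0 "q*t" q] by (simp add: atLeast0LessThan mult.commute add.commute)
  ultimately show ?case using Suc by (simp add: sum.union_disjoint ivl_disj_int)
qed

lemma prod_split_blocks:
  fixes f :: "nat \<Rightarrow> 'a::comm_monoid_mult"
  shows "prod f {..<q*t} = (\<Prod>i<t. \<Prod>v<q. f (i*q+v))"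
proof (induction t)
  case 0 then show ?case by simp
next
  case (Suc t)
  have "{..<q*Suc t} = {..<q*t} \<union> {q*t..<q*t+q}" by auto
  moreover have "prod f {q*t..<q*t+q} = (\<Prod>v<q. f (t*q+v))"
    using prod.shift_bounds_nat_ivl[of f 0 "q*t" q] by (simp add: atLeast0LessThan mult.commute add.commute)
  ultimately show ?case using Suc by (simp add: prod.union_disjoint ivl_disj_int)
qed


definition bdiag :: "nat \<Rightarrow> nat \<Rightarrow> (nat \<Rightarrow> real mat) \<Rightarrow> real mat" where
  "bdiag m q F = mat (q*m) (q*m) (\<lambda>(x,y). if x div m = y div m then F (x div m) $$ (x mod m, y mod m) else 0)"

lemma bdiag_carrier[simp]: "bdiag m q F \<in> carrier_mat (q*m) (q*m)"
  by (simp add: bdiag_def)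
lemma bdiag_dim[simp]: "dim_row (bdiag m q F) = q*m" "dim_col (bdiag m q F) = q*m"
  by (simp_all add: bdiag_def)

lemma det_bdiag:
  assumes "0 < m" "\<forall>b<q. F b \<in> carrier_mat m m"
  shows "det (bdiag m q F) = (\<Prod>b<q. det (F b))"
  using assms(2)
proof (induction q)
  case 0 then show ?case by (simp add: bdiag_def det_def)
next
  case (Suc q)
  have Fq: "F q \<in> carrier_mat m m" using Suc by auto
  let ?M = "four_block_mat (bdiag m q F) (0\<^sub>m (q*m) m) (0\<^sub>m m (q*m)) (F q)"
  have d1: "z < q*m \<Longrightarrow> z div m < q" for z by (simp add: less_mult_imp_div_less)
  have d2: "\<not> z < q*m \<Longrightarrow> z < q*m+m \<Longrightarrow> z div m = q \<and> z mod m = z - q*m" for z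
  proof -
    assume "\<not> z < q*m" "z < q*m+m"
    then obtain v where "z = q*m + v" "v < m" by (metis add_less_cancel_left le_Suc_ex not_less)
    then show ?thesis using assms(1) by simp
  qed
  have eq: "bdiag m (Suc q) F = ?M"
  proof (rule eq_matI)
    fix x y assume x: "x < dim_row ?M" and y: "y < dim_col ?M"
    have x': "x < q*m + m" and y': "y < q*m + m" using x y Fq by auto
    have idx: "?M $$ (x,y) = (if x < q*m then if y < q*m then bdiag m q F $$ (x,y) else 0
         else if y < q*m then 0 else F q $$ (x - q*m, y - q*m))"
      using x' y' Fq by (subst index_mat_four_block) auto
    show "bdiag m (Suc q) F $$ (x, y) = ?M $$ (x, y)"
    proof (cases "x < q*m")
      case True
      show ?thesis
      proof (cases "y < q*m")
        case True
        then show ?thesis using \<open>x < q*m\<close> idx by (simp add: bdiag_def)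
      next
        case False
        then show ?thesis using \<open>x < q*m\<close> idx x' y' d1[of x] d2[of y] by (simp add: bdiag_def)
      qed
    next
      case False
      show ?thesis
      proof (cases "y < q*m")
        case True
        then show ?thesis using \<open>\<not> x < q*m\<close> idx x' y' d1[of y] d2[of x] by (simp add: bdiag_def)
      next
        case False
        then show ?thesis using \<open>\<not> x < q*m\<close> idx x' y' d2[of x] d2[of y] by (simp add: bdiag_def)
      qed
    qed
  qed (use Fq in \<open>auto simp: bdiag_def\<close>)
  have "det (bdiag m (Suc q) F) = det (bdiag m q F) * det (F q)"
    unfolding eq by (rule det_four_block_mat_upper_right_zero[of _ "q*m" _ m], use Fq in \<open>auto\<close>)
  then show ?case using Suc by simp
qed


lemma det_1x1: "A \<in> carrier_mat 1 1 \<Longrightarrow> det A = A $$ (0,0)"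
  by (subst det_upper_triangular[of A 1]) (auto simp: upper_triangular_def diag_mat_def)

lemma schur_like:
  fixes A B C D W :: "real mat"
  assumes A: "A \<in> carrier_mat n n" and B: "B \<in> carrier_mat n q" and C: "C \<in> carrier_mat q n"
    and D: "D \<in> carrier_mat q q" and W: "W \<in> carrier_mat q n" and CDW: "C = D * W"
  shows "det (four_block_mat A B C D) = det D * det (A - B * W)"
proof -
  let ?M = "four_block_mat A B C D"
  let ?N = "four_block_mat (1\<^sub>m n) (0\<^sub>m n q) (- W) (1\<^sub>m q)"
  have M: "?M \<in> carrier_mat (n+q) (n+q)" using A B C D by auto
  have N: "?N \<in> carrier_mat (n+q) (n+q)" using W by auto
  have "?M * ?N = four_block_mat (A * 1\<^sub>m n + B * (- W)) (A * 0\<^sub>m n q + B * 1\<^sub>m q)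
      (C * 1\<^sub>m n + D * (- W)) (C * 0\<^sub>m n q + D * 1\<^sub>m q)"
    by (rule mult_four_block_mat[OF A B C D]) (use W in auto)
  also have "A * 1\<^sub>m n + B * (- W) = A - B * W"
    using A B W by (simp add: uminus_mult_right_mat add_uminus_minus_mat[of _ n n])
  also have "A * 0\<^sub>m n q + B * 1\<^sub>m q = B" using A B by simp
  also have "C * 1\<^sub>m n + D * (- W) = 0\<^sub>m q n"
    using C D W CDW by (simp add: uminus_mult_right_mat add_uminus_minus_mat[of _ q n])
  also have "C * 0\<^sub>m n q + D * 1\<^sub>m q = D" using C D by simp
  finally have MN: "?M * ?N = four_block_mat (A - B * W) B (0\<^sub>m q n) D" .
  have "det ?N = 1"
    by (subst det_four_block_mat_upper_right_zero[of _ n _ q]) (use W in auto)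
  moreover have "det (?M * ?N) = det ?M * det ?N" by (rule det_mult[OF M N])
  moreover have "det (four_block_mat (A - B * W) B (0\<^sub>m q n) D) = det (A - B * W) * det D"
    by (rule det_four_block_mat_lower_left_zero[of _ n _ q]) (use A B W D in auto)
  ultimately show ?thesis using MN by (simp add: mult.commute)
qed


lemma ones_mat_carrier[simp]: "ones_mat a b \<in> carrier_mat a b"
  and ones_mat_dim[simp]: "dim_row (ones_mat a b) = a" "dim_col (ones_mat a b) = b"
  and ones_mat_index[simp]: "i < a \<Longrightarrow> j < b \<Longrightarrow> ones_mat a b $$ (i,j) = 1"
  by (auto simp: ones_mat_def)

lemma det_one_plus_J:
  fixes c :: real
  shows "det (1\<^sub>m n + c \<cdot>\<^sub>m ones_mat n n) = 1 + c * real n"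
proof -
  let ?r = "ones_mat 1 n" and ?col = "c \<cdot>\<^sub>m ones_mat n 1"
  let ?J = "1\<^sub>m n + c \<cdot>\<^sub>m ones_mat n n"
  let ?M = "four_block_mat (1\<^sub>m 1) (- ?r) ?col (1\<^sub>m n)"
  have r: "- ?r \<in> carrier_mat 1 n" and col: "?col \<in> carrier_mat n 1" by auto
  have J: "?J \<in> carrier_mat n n" by auto
  have cJ: "?col * (- ?r) = - (c \<cdot>\<^sub>m ones_mat n n)"
    by (rule eq_matI) (auto simp: scalar_prod_def)
  have rc: "- ?r * ?col = - (c * real n) \<cdot>\<^sub>m 1\<^sub>m 1"
    by (rule eq_matI) (auto simp: scalar_prod_def)
  have f1: "four_block_mat (1\<^sub>m 1) (0\<^sub>m 1 n) ?col ?J * four_block_mat (1\<^sub>m 1) (- ?r) (0\<^sub>m n 1) (1\<^sub>m n)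
     = four_block_mat (1\<^sub>m 1 * 1\<^sub>m 1 + 0\<^sub>m 1 n * 0\<^sub>m n 1) (1\<^sub>m 1 * (- ?r) + 0\<^sub>m 1 n * 1\<^sub>m n)
        (?col * 1\<^sub>m 1 + ?J * 0\<^sub>m n 1) (?col * (- ?r) + ?J * 1\<^sub>m n)"
    by (rule mult_four_block_mat) (use r col J in auto)
  have e1: "?col * (- ?r) + ?J * 1\<^sub>m n = 1\<^sub>m n"
    unfolding cJ using J by (intro eq_matI) auto
  have "?M = four_block_mat (1\<^sub>m 1) (0\<^sub>m 1 n) ?col ?J * four_block_mat (1\<^sub>m 1) (- ?r) (0\<^sub>m n 1) (1\<^sub>m n)"
    unfolding f1 e1 using r col by (intro cong_four_block_mat) auto
  moreover have "det (four_block_mat (1\<^sub>m 1) (0\<^sub>m 1 n) ?col ?J * four_block_mat (1\<^sub>m 1) (- ?r) (0\<^sub>m n 1) (1\<^sub>m n))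
     = det (four_block_mat (1\<^sub>m 1) (0\<^sub>m 1 n) ?col ?J) * det (four_block_mat (1\<^sub>m 1) (- ?r) (0\<^sub>m n 1) (1\<^sub>m n))"
    by (rule det_mult[of _ "1+n"]) (use r col J in auto)
  moreover have "det (four_block_mat (1\<^sub>m 1) (0\<^sub>m 1 n) ?col ?J) = det (1\<^sub>m 1) * det ?J"
    by (rule det_four_block_mat_upper_right_zero[of _ 1 _ n]) (use r col J in auto)
  moreover have "det (four_block_mat (1\<^sub>m 1) (- ?r) (0\<^sub>m n 1) (1\<^sub>m n)) = det (1\<^sub>m 1) * det (1\<^sub>m n)"
    by (rule det_four_block_mat_lower_left_zero[of _ 1 _ n]) (use r col J in auto)
  ultimately have d1: "det ?M = det ?J" by simp
  let ?a = "(1 + c * real n) \<cdot>\<^sub>m 1\<^sub>m 1"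
  have f2: "four_block_mat ?a (- ?r) (0\<^sub>m n 1) (1\<^sub>m n) * four_block_mat (1\<^sub>m 1) (0\<^sub>m 1 n) ?col (1\<^sub>m n)
    = four_block_mat (?a * 1\<^sub>m 1 + (- ?r) * ?col) (?a * 0\<^sub>m 1 n + (- ?r) * 1\<^sub>m n)
        (0\<^sub>m n 1 * 1\<^sub>m 1 + 1\<^sub>m n * ?col) (0\<^sub>m n 1 * 0\<^sub>m 1 n + 1\<^sub>m n * 1\<^sub>m n)"
    by (rule mult_four_block_mat) (use r col J in auto)
  have e2: "?a * 1\<^sub>m 1 + (- ?r) * ?col = 1\<^sub>m 1"
    unfolding rc by (intro eq_matI) auto
  have "?M = four_block_mat ?a (- ?r) (0\<^sub>m n 1) (1\<^sub>m n) * four_block_mat (1\<^sub>m 1) (0\<^sub>m 1 n) ?col (1\<^sub>m n)"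
    unfolding f2 e2 using r col by (intro cong_four_block_mat) auto
  moreover have "det (four_block_mat ?a (- ?r) (0\<^sub>m n 1) (1\<^sub>m n) * four_block_mat (1\<^sub>m 1) (0\<^sub>m 1 n) ?col (1\<^sub>m n))
     = det (four_block_mat ?a (- ?r) (0\<^sub>m n 1) (1\<^sub>m n)) * det (four_block_mat (1\<^sub>m 1) (0\<^sub>m 1 n) ?col (1\<^sub>m n))"
    by (rule det_mult[of _ "1+n"]) (use r col J in auto)
  moreover have "det (four_block_mat ?a (- ?r) (0\<^sub>m n 1) (1\<^sub>m n)) = det ?a * det (1\<^sub>m n)"
    by (rule det_four_block_mat_lower_left_zero[of _ 1 _ n]) (use r col J in auto)
  moreover have "det (four_block_mat (1\<^sub>m 1) (0\<^sub>m 1 n) ?col (1\<^sub>m n)) = det (1\<^sub>m 1) * det (1\<^sub>m n)"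
    by (rule det_four_block_mat_upper_right_zero[of _ 1 _ n]) (use r col J in auto)
  ultimately have d2: "det ?M = 1 + c * real n" by simp
  show ?thesis using d1 d2 by simp
qed


lemma count_pair:
  assumes U: "finite U" and xy: "x \<in> U" "y \<in> U" "x \<noteq> y"
  shows "card {e. e \<subseteq> U \<and> card e = k \<and> x \<in> e \<and> y \<in> e} = binom (card U - 2) (int k - 2)"
proof (cases "k < 2")
  case True
  have "{e. e \<subseteq> U \<and> card e = k \<and> x \<in> e \<and> y \<in> e} = {}"
  proof (rule ccontr)
    assume "\<not> ?thesis"
    then obtain e where e: "e \<subseteq> U" "card e = k" "x \<in> e" "y \<in> e" by auto
    have "finite e" using e U finite_subset by auto
    hence "card {x,y} \<le> card e" using e by (intro card_mono) auto
    thus False using e xy True by auto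
  qed
  hence "card {e. e \<subseteq> U \<and> card e = k \<and> x \<in> e \<and> y \<in> e} = 0" by (simp only: card.empty)
  thus ?thesis using True by (simp add: binom_def)
next
  case False
  let ?S = "{e. e \<subseteq> U \<and> card e = k \<and> x \<in> e \<and> y \<in> e}"
  let ?T = "{f. f \<subseteq> U - {x,y} \<and> card f = k - 2}"
  have "bij_betw (\<lambda>e. e - {x,y}) ?S ?T"
  proof (rule bij_betw_byWitness[where f' = "\<lambda>f. f \<union> {x,y}"])
    show "\<forall>a\<in>?S. a - {x, y} \<union> {x, y} = a" by auto
    show "\<forall>a'\<in>?T. a' \<union> {x, y} - {x, y} = a'" by auto
    show "(\<lambda>e. e - {x, y}) ` ?S \<subseteq> ?T"
    proof
      fix f assume "f \<in> (\<lambda>e. e - {x, y}) ` ?S"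
      then obtain e where e: "e \<in> ?S" "f = e - {x,y}" by auto
      have "finite e" using e U finite_subset by auto
      have sub: "{x,y} \<subseteq> e" using e by auto
      have "card f = card e - card {x,y}" unfolding e(2) by (rule card_Diff_subset[OF _ sub]) simp
      thus "f \<in> ?T" using e xy by auto
    qed
    show "(\<lambda>f. f \<union> {x, y}) ` ?T \<subseteq> ?S"
    proof
      fix e assume "e \<in> (\<lambda>f. f \<union> {x, y}) ` ?T"
      then obtain f where f: "f \<in> ?T" "e = f \<union> {x,y}" by auto
      have "finite f" using f U finite_subset by blast
      have "card e = card f + card {x,y}" unfolding f(2) by (rule card_Un_disjoint) (use f \<open>finite f\<close> in auto)
      thus "e \<in> ?S" using f xy False by auto
    qed
  qed
  hence "card ?S = card ?T" by (rule bij_betw_same_card)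
  also have "\<dots> = card (U - {x,y}) choose (k - 2)" using U by (simp add: n_subsets)
  also have "card (U - {x,y}) = card U - 2" using U xy by (simp add: card_Diff_subset)
  finally show ?thesis using False by (simp add: binom_def nat_diff_distrib)
qed

lemma count_pair_not_sub:
  assumes U: "finite U" and W: "W \<subseteq> U" and xy: "x \<in> W" "y \<in> W" "x \<noteq> y"
  shows "real (card {e. e \<subseteq> U \<and> card e = k \<and> x \<in> e \<and> y \<in> e \<and> \<not> e \<subseteq> W})
      = real (binom (card U - 2) (int k - 2)) - real (binom (card W - 2) (int k - 2))"
proof -
  have fW: "finite W" using U W finite_subset by auto
  let ?S1 = "{e. e \<subseteq> U \<and> card e = k \<and> x \<in> e \<and> y \<in> e}"
  let ?S2 = "{e. e \<subseteq> W \<and> card e = k \<and> x \<in> e \<and> y \<in> e}"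
  have eq: "{e. e \<subseteq> U \<and> card e = k \<and> x \<in> e \<and> y \<in> e \<and> \<not> e \<subseteq> W} = ?S1 - ?S2" by auto
  have sub: "?S2 \<subseteq> ?S1" using W by auto
  have fin: "finite ?S1" by (rule finite_subset[of _ "Pow U"]) (use U in auto)
  have "card (?S1 - ?S2) = card ?S1 - card ?S2" using sub fin by (simp add: card_Diff_subset finite_subset)
  moreover have "card ?S2 \<le> card ?S1" using sub fin by (simp add: card_mono)
  ultimately show ?thesis unfolding eq
    using count_pair[OF U, of x y k] count_pair[OF fW xy, of k] xy W by (simp add: of_nat_diff subsetD)
qed

lemma regular_rowsum:
  assumes reg: "regular_hg k r m G" and v: "v < m"
  shows "(\<Sum>v'\<in>{..<m}-{v}. real (card {e\<in>G. v \<in> e \<and> v' \<in> e})) = real r * (real k - 1)"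
proof -
  have G: "\<forall>e\<in>G. e \<subseteq> {..<m} \<and> card e = k" using reg unfolding regular_hg_def uniform_hg_def hypergraph_def by auto
  have fG: "finite G" by (rule finite_subset[of _ "Pow {..<m}"]) (use G in auto)
  have r: "card {e\<in>G. v \<in> e} = r" using reg v unfolding regular_hg_def by auto
  have "(\<Sum>v'\<in>{..<m}-{v}. real (card {e\<in>G. v \<in> e \<and> v' \<in> e}))
      = (\<Sum>v'\<in>{..<m}-{v}. \<Sum>e\<in>G. if v \<in> e \<and> v' \<in> e then 1 else 0)"
    using fG by (intro sum.cong refl) (simp add: sum.If_cases Int_def)
  also have "\<dots> = (\<Sum>e\<in>G. \<Sum>v'\<in>{..<m}-{v}. if v \<in> e \<and> v' \<in> e then 1 else 0)"
    by (rule sum.swap)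
  also have "\<dots> = (\<Sum>e\<in>G. if v \<in> e then real k - 1 else 0)"
  proof (intro sum.cong refl)
    fix e assume e: "e \<in> G"
    have fe: "finite e" using G e finite_subset by blast
    have "(\<Sum>v'\<in>{..<m}-{v}. (if v \<in> e \<and> v' \<in> e then 1 else 0 :: real))
        = (if v \<in> e then real (card (({..<m}-{v}) \<inter> e)) else 0)"
      by (simp add: sum.If_cases)
    also have "({..<m}-{v}) \<inter> e = e - {v}" using G e by auto
    finally have eqA: "(\<Sum>v'\<in>{..<m}-{v}. (if v \<in> e \<and> v' \<in> e then 1 else 0 :: real))
        = (if v \<in> e then real (card (e - {v})) else 0)" .
    show "(\<Sum>v'\<in>{..<m}-{v}. (if v \<in> e \<and> v' \<in> e then 1 else 0 :: real))
        = (if v \<in> e then real k - 1 else 0)"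
    proof (cases "v \<in> e")
      case True
      have "card e \<ge> 1" using fe True card_gt_0_iff[of e] by auto
      then show ?thesis unfolding eqA using G e fe True by (simp add: card_Diff_singleton of_nat_diff)
    qed (simp)
  qed
  also have "\<dots> = real (card {e\<in>G. v \<in> e}) * (real k - 1)"
    using fG by (simp add: sum.If_cases Int_def conj_commute)
  finally show ?thesis using r by simp
qed


lemma part_mem: "0 < p \<Longrightarrow> z \<in> part p i \<longleftrightarrow> z div p = i"
  unfolding part_def
proof
  assume p: "0 < p" and z: "z \<in> {i*p..<(i+1)*p}"
  show "z div p = i" by (rule div_nat_eqI) (use z in \<open>auto simp: mult.commute\<close>)
next
  assume p: "0 < p" and z: "z div p = i"
  have "z = i*p + z mod p" using div_mult_mod_eq[of z p] z by simp
  moreover have "z mod p < p" using p by simp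
  ultimately have "i*p \<le> z" "z < i*p + p" by linarith+
  then show "z \<in> {i*p..<(i+1)*p}" by (simp add: algebra_simps)
qed

lemma copy_mem: "0 < m \<Longrightarrow> z \<in> copy_set p t m i j \<longleftrightarrow> p*t \<le> z \<and> (z - p*t) div m = i*p + j"
  unfolding copy_set_def copy_vtx_def
proof
  assume m: "0 < m" and "z \<in> (\<lambda>v. p*t + (i*p+j)*m + v) ` {..<m}"
  then obtain v where v: "v < m" "z = p*t + (i*p+j)*m + v" by auto
  then show "p*t \<le> z \<and> (z - p*t) div m = i*p + j" by simp
next
  assume m: "0 < m" and z: "p*t \<le> z \<and> (z - p*t) div m = i*p + j"
  have "z - p*t = (i*p+j)*m + (z - p*t) mod m" using z by (metis mult.commute div_mult_mod_eq)
  then have "z = p*t + (i*p+j)*m + (z - p*t) mod m" using z by linarith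
  moreover have "(z - p*t) mod m < m" using m by simp
  ultimately show "z \<in> (\<lambda>v. p*t + (i*p+j)*m + v) ` {..<m}" by blast
qed

lemma copy_vtx_mem_img: "0 < m \<Longrightarrow> g \<subseteq> {..<m} \<Longrightarrow>
   z \<in> copy_vtx p t m i j ` g \<longleftrightarrow> p*t \<le> z \<and> (z - p*t) div m = i*p + j \<and> (z - p*t) mod m \<in> g"
proof
  assume m: "0 < m" and g: "g \<subseteq> {..<m}" and "z \<in> copy_vtx p t m i j ` g"
  then obtain v where v: "v \<in> g" "z = p*t + (i*p+j)*m + v" by (auto simp: copy_vtx_def)
  have "v < m" using v g by auto
  then show "p*t \<le> z \<and> (z - p*t) div m = i*p + j \<and> (z - p*t) mod m \<in> g" using v by simp
next
  assume m: "0 < m" and g: "g \<subseteq> {..<m}" and z: "p*t \<le> z \<and> (z - p*t) div m = i*p + j \<and> (z - p*t) mod m \<in> g"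
  have "z - p*t = (i*p+j)*m + (z - p*t) mod m" using z by (metis mult.commute div_mult_mod_eq)
  then have "z = copy_vtx p t m i j ((z - p*t) mod m)" unfolding copy_vtx_def using z by linarith
  then show "z \<in> copy_vtx p t m i j ` g" using z by blast
qed

lemma finite_part[simp]: "finite (part p i)" by (simp add: part_def)
lemma card_part: "card (part p i) = p" by (simp add: part_def)
lemma finite_copy[simp]: "finite (copy_set p t m i j)" by (simp add: copy_set_def)
lemma card_copy: "card (copy_set p t m i j) = m"
  unfolding copy_set_def by (subst card_image) (auto simp: copy_vtx_def inj_on_def)

lemma part_lt: "i < t \<Longrightarrow> z \<in> part p i \<Longrightarrow> z < p*t"
proof -
  assume "i < t" "z \<in> part p i"
  then have "z < (i+1)*p" by (auto simp: part_def)
  moreover have "(i+1)*p \<le> t*p" using \<open>i < t\<close> by (intro mult_le_mono1) simp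
  ultimately have "z < t*p" by linarith
  then show "z < p*t" by (simp add: mult.commute)
qed

lemma copy_ge: "z \<in> copy_set p t m i j \<Longrightarrow> p*t \<le> z"
  by (auto simp: copy_set_def copy_vtx_def)

lemma part_copy_disj: "i < t \<Longrightarrow> part p i \<inter> copy_set p t m i' j = {}"
  using part_lt copy_ge by fastforce

lemma blk_unique: "(j::nat) < p \<Longrightarrow> j' < p \<Longrightarrow> i*p + j = i'*p + j' \<Longrightarrow> i = i' \<and> j = j'"
proof -
  assume a: "j < p" "j' < p" "i*p + j = i'*p + j'"
  have p: "0 < p" using a by simp
  have "(i*p + j) div p = i" "(i'*p+j') div p = i'" using a(1,2) p by simp_all
  then have "i = i'" using a by metis
  then show ?thesis using a by simp
qed

lemma card_part_copy: "i < t \<Longrightarrow> card (part p i \<union> copy_set p t m i j) = p + m"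
  by (subst card_Un_disjoint) (auto simp: part_copy_disj card_part card_copy)


definition mixe :: "nat \<Rightarrow> nat \<Rightarrow> nat \<Rightarrow> nat \<Rightarrow> nat \<Rightarrow> nat \<Rightarrow> nat set set" where
  "mixe k p t m i j = {e. e \<subseteq> part p i \<union> copy_set p t m i j \<and> card e = k
                          \<and> e \<inter> part p i \<noteq> {} \<and> e \<inter> copy_set p t m i j \<noteq> {}}"

lemma edges_iff: "e \<in> corona_edges k p t m E0 Gs \<longleftrightarrow> e \<in> E0
   \<or> (\<exists>i<t. \<exists>j<p. \<exists>g\<in>Gs i. e = copy_vtx p t m i j ` g) \<or> (\<exists>i<t. \<exists>j<p. e \<in> mixe k p t m i j)"
  unfolding corona_edges_def mixe_def by blast

lemma div_lt_t: "x < p*t \<Longrightarrow> x div p < (t::nat)"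
  by (simp add: less_mult_imp_div_less mult.commute)

context
  fixes k r p t m :: nat and E0 :: "nat set set" and Gs :: "nat \<Rightarrow> nat set set"
  assumes p1: "1 \<le> p" and m2: "2 \<le> m"
    and E0u: "uniform_hg k (p*t) E0"
    and Gsr: "\<forall>i<t. regular_hg k r m (Gs i)"
begin

lemma E0_sub: "e \<in> E0 \<Longrightarrow> e \<subseteq> {..<p*t}"
  using E0u unfolding uniform_hg_def hypergraph_def by auto

lemma Gs_sub: "i < t \<Longrightarrow> g \<in> Gs i \<Longrightarrow> g \<subseteq> {..<m}"
  using Gsr unfolding regular_hg_def uniform_hg_def hypergraph_def by auto

lemma finite_E0: "finite E0"
  by (rule finite_subset[of _ "Pow {..<p*t}"]) (use E0_sub in auto)

lemma cnt_AA:
  assumes x: "x < p*t" and y: "y < p*t" and xy: "x \<noteq> y"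
  shows "real (card {e\<in>corona_edges k p t m E0 Gs. x\<in>e \<and> y\<in>e})
    = real (card {e\<in>E0. x\<in>e \<and> y\<in>e})
      + (if x div p = y div p then real p * (real (binom (p+m-2) (int k - 2)) - real (binom (p-2) (int k - 2))) else 0)"
proof -
  have mp: "0 < m" "0 < p" using p1 m2 by auto
  define i where "i = x div p"
  have it: "i < t" using x div_lt_t unfolding i_def by blast
  define M where "M j = {e. e \<subseteq> part p i \<union> copy_set p t m i j \<and> card e = k \<and> x\<in>e \<and> y\<in>e \<and> \<not> e \<subseteq> part p i}" for j
  let ?E = "corona_edges k p t m E0 Gs"
  have K: "e \<in> E0 \<or> (x div p = y div p \<and> (\<exists>j<p. e \<in> M j))"
    if e: "e \<in> ?E" "x \<in> e" "y \<in> e" for e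
  proof -
    consider (a) "e \<in> E0" | (b) i' j' g where "i' < t" "j' < p" "g \<in> Gs i'" "e = copy_vtx p t m i' j' ` g"
      | (c) i' j' where "i' < t" "j' < p" "e \<in> mixe k p t m i' j'"
      using e(1) unfolding edges_iff by blast
    then show ?thesis
    proof cases
      case a then show ?thesis by simp
    next
      case b
      then have "p*t \<le> x" using e(2) copy_vtx_mem_img[OF mp(1) Gs_sub[OF b(1,3)]] by blast
      then show ?thesis using x by simp
    next
      case c
      have esub: "e \<subseteq> part p i' \<union> copy_set p t m i' j'" "e \<inter> copy_set p t m i' j' \<noteq> {}" "card e = k"
        using c(3) unfolding mixe_def by auto
      have "x \<notin> copy_set p t m i' j'" "y \<notin> copy_set p t m i' j'" using x y copy_ge by force+
      then have "x \<in> part p i'" "y \<in> part p i'" using esub e by auto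
      then have xi: "x div p = i'" "y div p = i'" using part_mem mp by auto
      have "\<not> e \<subseteq> part p i'" using esub(2) part_copy_disj[OF c(1)] by blast
      then have "e \<in> M j'" unfolding M_def i_def using esub e xi by auto
      then show ?thesis using xi c(2) by auto
    qed
  qed
  have K2: "e \<in> ?E" if "x div p = y div p" "j < p" "e \<in> M j" for e j
  proof -
    have e: "e \<subseteq> part p i \<union> copy_set p t m i j" "card e = k" "x \<in> e" "\<not> e \<subseteq> part p i"
      using that(3) unfolding M_def by auto
    have "x \<in> part p i" using part_mem mp unfolding i_def by auto
    then have "e \<in> mixe k p t m i j" using e unfolding mixe_def by blast
    then show ?thesis unfolding edges_iff using it that(2) by blast
  qed
  have E0E: "E0 \<subseteq> ?E" by (auto simp: edges_iff)
  have finM: "finite (M j)" for j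
    by (rule finite_subset[of _ "Pow (part p i \<union> copy_set p t m i j)"]) (auto simp: M_def)
  show ?thesis
  proof (cases "x div p = y div p")
    case False
    have "{e\<in>?E. x\<in>e \<and> y\<in>e} = {e\<in>E0. x\<in>e \<and> y\<in>e}" using K False E0E by blast
    then show ?thesis using False by simp
  next
    case True
    have eq: "{e\<in>?E. x\<in>e \<and> y\<in>e} = {e\<in>E0. x\<in>e \<and> y\<in>e} \<union> (\<Union>j<p. M j)"
    proof (intro equalityI subsetI)
      fix e assume "e \<in> {e\<in>?E. x\<in>e \<and> y\<in>e}" then show "e \<in> {e\<in>E0. x\<in>e \<and> y\<in>e} \<union> (\<Union>j<p. M j)"
        using K[of e] by auto
    next
      fix e assume a: "e \<in> {e\<in>E0. x\<in>e \<and> y\<in>e} \<union> (\<Union>j<p. M j)"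
      show "e \<in> {e\<in>?E. x\<in>e \<and> y\<in>e}"
      proof (cases "e \<in> E0")
        case True then show ?thesis using a E0E unfolding M_def by auto
      next
        case False
        then obtain j where "j < p" "e \<in> M j" using a by auto
        then show ?thesis using K2[OF True] unfolding M_def by auto
      qed
    qed
    have disj1: "{e\<in>E0. x\<in>e \<and> y\<in>e} \<inter> (\<Union>j<p. M j) = {}"
    proof -
      have "e \<notin> E0" if eM: "e \<in> M j" for e j
      proof
        assume "e \<in> E0"
        then have "e \<subseteq> {..<p*t}" by (rule E0_sub)
        moreover obtain z where "z \<in> e" "z \<notin> part p i" using eM unfolding M_def by blast
        moreover have "z \<in> copy_set p t m i j" using calculation(2,3) eM unfolding M_def by auto
        ultimately show False using copy_ge by fastforce
      qed
      then show ?thesis by blast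
    qed
    have disj2: "M j \<inter> M j' = {}" if "j < p" "j' < p" "j \<noteq> j'" for j j'
    proof (rule ccontr)
      assume "M j \<inter> M j' \<noteq> {}"
      then obtain e where e: "e \<in> M j" "e \<in> M j'" by auto
      then obtain z where z: "z \<in> e" "z \<notin> part p i" unfolding M_def by auto
      have "z \<in> copy_set p t m i j" "z \<in> copy_set p t m i j'" using e z unfolding M_def by auto
      then have "i*p + j = i*p + j'" using copy_mem mp by auto
      then show False using that by simp
    qed
    have cM: "real (card (M j)) = real (binom (p+m-2) (int k - 2)) - real (binom (p-2) (int k - 2))" for j
    proof -
      have "x \<in> part p i" "y \<in> part p i" using part_mem mp True unfolding i_def by auto
      have "M j = {e. e \<subseteq> part p i \<union> copy_set p t m i j \<and> card e = k \<and> x \<in> e \<and> y \<in> e \<and> \<not> e \<subseteq> part p i}"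
        unfolding M_def ..
      then show ?thesis
        using count_pair_not_sub[of "part p i \<union> copy_set p t m i j" "part p i" x y k]
          \<open>x \<in> part p i\<close> \<open>y \<in> part p i\<close> xy card_part_copy[OF it] card_part by auto
    qed
    have "card (\<Union>j<p. M j) = (\<Sum>j<p. card (M j))"
      by (rule card_UN_disjoint) (use finM disj2 in auto)
    then have "real (card (\<Union>j<p. M j)) = real p * (real (binom (p+m-2) (int k - 2)) - real (binom (p-2) (int k - 2)))"
      using cM by simp
    moreover have "card {e\<in>?E. x\<in>e \<and> y\<in>e} = card {e\<in>E0. x\<in>e \<and> y\<in>e} + card (\<Union>j<p. M j)"
      unfolding eq by (rule card_Un_disjoint) (use finite_E0 finM disj1 in auto)
    ultimately show ?thesis using True by simp
  qed
qed

end


context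
  fixes k r p t m :: nat and E0 :: "nat set set" and Gs :: "nat \<Rightarrow> nat set set"
  assumes p1: "1 \<le> p" and m2: "2 \<le> m"
    and E0u: "uniform_hg k (p*t) E0"
    and Gsr: "\<forall>i<t. regular_hg k r m (Gs i)"
begin

lemmas E0_sub' = E0_sub[OF p1 m2 E0u Gsr]
lemmas Gs_sub' = Gs_sub[OF p1 m2 E0u Gsr]
lemmas finite_E0' = finite_E0[OF p1 m2 E0u Gsr]

lemma blk_lt: "p*t \<le> y \<Longrightarrow> y < p*t + p*t*m \<Longrightarrow> (y - p*t) div m < p*t"
proof -
  assume a: "p*t \<le> y" "y < p*t + p*t*m"
  have "y - p*t < p*t*m" using a by linarith
  then show ?thesis by (simp add: less_mult_imp_div_less)
qed

lemma cnt_AB: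
  assumes x: "x < p*t" and y: "p*t \<le> y" "y < p*t + p*t*m"
  shows "real (card {e\<in>corona_edges k p t m E0 Gs. x\<in>e \<and> y\<in>e})
    = (if x div p = (y - p*t) div m div p then real (binom (p+m-2) (int k - 2)) else 0)"
proof -
  have mp: "0 < m" "0 < p" using p1 m2 by auto
  define i where "i = x div p"
  define b where "b = (y - p*t) div m"
  define j where "j = b mod p"
  have it: "i < t" using x div_lt_t unfolding i_def by blast
  have jp: "j < p" using mp unfolding j_def by simp
  define Mb where "Mb = {e. e \<subseteq> part p i \<union> copy_set p t m i j \<and> card e = k \<and> x\<in>e \<and> y\<in>e}"
  let ?E = "corona_edges k p t m E0 Gs"
  have K: "x div p = b div p \<and> e \<in> Mb"
    if e: "e \<in> ?E" "x \<in> e" "y \<in> e" for e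
  proof -
    consider (a) "e \<in> E0" | (b) i' j' g where "i' < t" "j' < p" "g \<in> Gs i'" "e = copy_vtx p t m i' j' ` g"
      | (c) i' j' where "i' < t" "j' < p" "e \<in> mixe k p t m i' j'"
      using e(1) unfolding edges_iff by blast
    then show ?thesis
    proof cases
      case a then show ?thesis using E0_sub' e y by force
    next
      case b
      then have "p*t \<le> x" using e(2) copy_vtx_mem_img[OF mp(1) Gs_sub'[OF b(1,3)]] by blast
      then show ?thesis using x by simp
    next
      case c
      have esub: "e \<subseteq> part p i' \<union> copy_set p t m i' j'" "card e = k"
        using c(3) unfolding mixe_def by auto
      have "x \<notin> copy_set p t m i' j'" using x copy_ge by force
      then have "x \<in> part p i'" using esub e by auto
      then have xi: "x div p = i'" using part_mem mp by auto
      have "y \<notin> part p i'" using y part_lt[OF c(1)] by force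
      then have "y \<in> copy_set p t m i' j'" using esub e by auto
      then have "b = i'*p + j'" using copy_mem mp unfolding b_def by auto
      then have bij: "b div p = i'" "b mod p = j'" using c(2) by auto
      have "e \<in> Mb" unfolding Mb_def i_def j_def using esub e xi bij by auto
      then show ?thesis using xi bij by auto
    qed
  qed
  have K2: "e \<in> ?E" if "x div p = b div p" "e \<in> Mb" for e
  proof -
    have e: "e \<subseteq> part p i \<union> copy_set p t m i j" "card e = k" "x \<in> e" "y \<in> e"
      using that(2) unfolding Mb_def by auto
    have "x \<in> part p i" using part_mem mp unfolding i_def by auto
    moreover have "y \<in> copy_set p t m i j"
      using copy_mem[OF mp(1)] y that(1) unfolding i_def j_def b_def by auto
    ultimately have "e \<in> mixe k p t m i j" using e unfolding mixe_def by blast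
    then show ?thesis unfolding edges_iff using it jp by blast
  qed
  show ?thesis
  proof (cases "x div p = b div p")
    case False
    have "{e\<in>?E. x\<in>e \<and> y\<in>e} = {}" using K False by blast
    then have "card {e\<in>?E. x\<in>e \<and> y\<in>e} = 0" by (simp only: card.empty)
    then show ?thesis using False unfolding b_def by simp
  next
    case True
    have eq: "{e\<in>?E. x\<in>e \<and> y\<in>e} = Mb" using K K2[OF True] unfolding Mb_def by blast
    have xin: "x \<in> part p i" using part_mem mp unfolding i_def by auto
    have yin: "y \<in> copy_set p t m i j"
      using copy_mem[OF mp(1)] y True unfolding i_def j_def b_def by auto
    have "x \<noteq> y" using x y by simp
    then have "card Mb = binom (card (part p i \<union> copy_set p t m i j) - 2) (int k - 2)"
      unfolding Mb_def by (intro count_pair) (use xin yin in auto)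
    then show ?thesis using eq True card_part_copy[OF it] unfolding b_def by simp
  qed
qed

end


context
  fixes k r p t m :: nat and E0 :: "nat set set" and Gs :: "nat \<Rightarrow> nat set set"
  assumes p1: "1 \<le> p" and m2: "2 \<le> m"
    and E0u: "uniform_hg k (p*t) E0"
    and Gsr: "\<forall>i<t. regular_hg k r m (Gs i)"
begin

lemmas E0_sub'' = E0_sub[OF p1 m2 E0u Gsr]
lemmas Gs_sub'' = Gs_sub[OF p1 m2 E0u Gsr]
lemmas blk_lt' = blk_lt[OF p1 m2 E0u Gsr]

lemma cnt_BB:
  assumes x: "p*t \<le> x" "x < p*t + p*t*m" and y: "p*t \<le> y" "y < p*t + p*t*m" and xy: "x \<noteq> y"
  shows "real (card {e\<in>corona_edges k p t m E0 Gs. x\<in>e \<and> y\<in>e})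
    = (if (x - p*t) div m = (y - p*t) div m then
        real (card {g\<in>Gs ((x - p*t) div m div p). (x - p*t) mod m \<in> g \<and> (y - p*t) mod m \<in> g})
        + (real (binom (p+m-2) (int k - 2)) - real (binom (m-2) (int k - 2))) else 0)"
proof -
  have mp: "0 < m" "0 < p" using p1 m2 by auto
  define b where "b = (x - p*t) div m"
  define i where "i = b div p"
  define j where "j = b mod p"
  define vx where "vx = (x - p*t) mod m"
  define vy where "vy = (y - p*t) mod m"
  have bt: "b < p*t" using blk_lt'[OF x] unfolding b_def .
  have it: "i < t" using bt div_lt_t unfolding i_def by blast
  have jp: "j < p" using mp unfolding j_def by simp
  have bij: "b = i*p + j" unfolding i_def j_def by simp
  define Mc where "Mc = {e. e \<subseteq> part p i \<union> copy_set p t m i j \<and> card e = k \<and> x\<in>e \<and> y\<in>e \<and> \<not> e \<subseteq> copy_set p t m i j}"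
  define Ic where "Ic = (\<lambda>g. copy_vtx p t m i j ` g) ` {g\<in>Gs i. vx \<in> g \<and> vy \<in> g}"
  let ?E = "corona_edges k p t m E0 Gs"
  have xc: "x \<in> copy_set p t m i j" using copy_mem[OF mp(1)] x bij unfolding b_def by auto
  have K: "(y - p*t) div m = b \<and> (e \<in> Ic \<or> e \<in> Mc)"
    if e: "e \<in> ?E" "x \<in> e" "y \<in> e" for e
  proof -
    consider (a) "e \<in> E0" | (b) i' j' g where "i' < t" "j' < p" "g \<in> Gs i'" "e = copy_vtx p t m i' j' ` g"
      | (c) i' j' where "i' < t" "j' < p" "e \<in> mixe k p t m i' j'"
      using e(1) unfolding edges_iff by blast
    then show ?thesis
    proof cases
      case a then show ?thesis using E0_sub'' e x by force
    next
      case b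
      note mi = copy_vtx_mem_img[OF mp(1) Gs_sub''[OF b(1,3)]]
      have hx: "(x - p*t) div m = i'*p + j'" "(x - p*t) mod m \<in> g" using e(2) mi b(4) by auto
      have hy: "(y - p*t) div m = i'*p + j'" "(y - p*t) mod m \<in> g" using e(3) mi b(4) by auto
      have "i' = i \<and> j' = j" using blk_unique[of j p j' i i'] hx(1) bij jp b(2) unfolding b_def by auto
      then have "e \<in> Ic" unfolding Ic_def using b hx hy unfolding vx_def vy_def by auto
      then show ?thesis using hx hy \<open>i' = i \<and> j' = j\<close> bij unfolding b_def by auto
    next
      case c
      have esub: "e \<subseteq> part p i' \<union> copy_set p t m i' j'" "card e = k" "e \<inter> part p i' \<noteq> {}"
        using c(3) unfolding mixe_def by auto
      have "x \<notin> part p i'" "y \<notin> part p i'" using x y part_lt[OF c(1)] by force+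
      then have "x \<in> copy_set p t m i' j'" "y \<in> copy_set p t m i' j'" using esub e by auto
      then have hb: "(x - p*t) div m = i'*p + j'" "(y - p*t) div m = i'*p + j'" using copy_mem mp by auto
      have "i' = i \<and> j' = j" using blk_unique[of j p j' i i'] hb(1) bij jp c(2) unfolding b_def by auto
      have "\<not> e \<subseteq> copy_set p t m i' j'" using esub(3) part_copy_disj[OF c(1)] by blast
      then have "e \<in> Mc" unfolding Mc_def using esub e \<open>i' = i \<and> j' = j\<close> by auto
      then show ?thesis using hb \<open>i' = i \<and> j' = j\<close> bij unfolding b_def by auto
    qed
  qed
  have K2: "e \<in> ?E \<and> x \<in> e \<and> y \<in> e" if "(y - p*t) div m = b" "e \<in> Ic \<or> e \<in> Mc" for e
  proof -
    have yc: "y \<in> copy_set p t m i j" using copy_mem[OF mp(1)] y bij that(1) by auto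
    show ?thesis using that(2)
    proof
      assume "e \<in> Ic"
      then obtain g where g: "g \<in> Gs i" "vx \<in> g" "vy \<in> g" "e = copy_vtx p t m i j ` g" unfolding Ic_def by auto
      note mi = copy_vtx_mem_img[OF mp(1) Gs_sub''[OF it g(1)]]
      have "x \<in> e" "y \<in> e" using g x y bij that(1) mi unfolding b_def vx_def vy_def by auto
      moreover have "e \<in> ?E" unfolding edges_iff using it jp g by blast
      ultimately show ?thesis by blast
    next
      assume "e \<in> Mc"
      then have e: "e \<subseteq> part p i \<union> copy_set p t m i j" "card e = k" "x \<in> e" "y \<in> e" "\<not> e \<subseteq> copy_set p t m i j"
        unfolding Mc_def by auto
      have "e \<in> mixe k p t m i j" using e xc unfolding mixe_def by blast
      then show ?thesis unfolding edges_iff using it jp e by blast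
    qed
  qed
  show ?thesis
  proof (cases "(y - p*t) div m = b")
    case False
    have "{e\<in>?E. x\<in>e \<and> y\<in>e} = {}" using K False by blast
    then have "card {e\<in>?E. x\<in>e \<and> y\<in>e} = 0" by (simp only: card.empty)
    then show ?thesis using False unfolding b_def by auto
  next
    case True
    have eq: "{e\<in>?E. x\<in>e \<and> y\<in>e} = Ic \<union> Mc" using K K2[OF True] by blast
    have yc: "y \<in> copy_set p t m i j" using copy_mem[OF mp(1)] y bij True by auto
    have finMc: "finite Mc"
      by (rule finite_subset[of _ "Pow (part p i \<union> copy_set p t m i j)"]) (auto simp: Mc_def)
    have finG: "finite (Gs i)"
      by (rule finite_subset[of _ "Pow {..<m}"]) (use Gs_sub''[OF it] in auto)
    have finIc: "finite Ic" unfolding Ic_def using finG by simp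
    have disj: "Ic \<inter> Mc = {}"
    proof -
      have "e \<subseteq> copy_set p t m i j" if "e \<in> Ic" for e
        using that Gs_sub''[OF it] unfolding Ic_def copy_set_def by auto
      then show ?thesis unfolding Mc_def by blast
    qed
    have inj: "inj_on (\<lambda>g. copy_vtx p t m i j ` g) {g\<in>Gs i. vx \<in> g \<and> vy \<in> g}"
    proof (rule inj_onI)
      fix g g' assume "g \<in> {g\<in>Gs i. vx \<in> g \<and> vy \<in> g}" "g' \<in> {g\<in>Gs i. vx \<in> g \<and> vy \<in> g}"
        and eqg: "copy_vtx p t m i j ` g = copy_vtx p t m i j ` g'"
      have "inj (copy_vtx p t m i j)" by (auto simp: inj_def copy_vtx_def)
      then show "g = g'" using eqg by (simp add: inj_image_eq_iff)
    qed
    have cIc: "card Ic = card {g\<in>Gs i. vx \<in> g \<and> vy \<in> g}" unfolding Ic_def by (rule card_image[OF inj])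
    have cMc: "real (card Mc) = real (binom (p+m-2) (int k - 2)) - real (binom (m-2) (int k - 2))"
      using count_pair_not_sub[of "part p i \<union> copy_set p t m i j" "copy_set p t m i j" x y k]
        xc yc xy card_part_copy[OF it] card_copy unfolding Mc_def by auto
    have "card {e\<in>?E. x\<in>e \<and> y\<in>e} = card Ic + card Mc"
      unfolding eq by (rule card_Un_disjoint[OF finIc finMc disj])
    then show ?thesis using True cIc cMc unfolding i_def b_def vx_def vy_def by simp
  qed
qed

end


lemma seidel_index: "x < n \<Longrightarrow> y < n \<Longrightarrow> seidel_mat n E $$ (x,y) =
   (if x = y then 0 else 1 - 2 * real (card {e\<in>E. x\<in>e \<and> y\<in>e}))"
  by (simp add: seidel_mat_def adj_mat_def ones_mat_def)

lemma adj_dim[simp]: "dim_row (adj_mat n E) = n" "dim_col (adj_mat n E) = n"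
  by (auto simp: adj_mat_def)

lemma seidel_dim[simp]: "dim_row (seidel_mat n E) = n" "dim_col (seidel_mat n E) = n"
  by (auto simp: seidel_mat_def ones_mat_def)

lemma seidel_carrier[simp]: "seidel_mat n E \<in> carrier_mat n n"
  by (rule carrier_matI) simp_all

definition Yf :: "nat \<Rightarrow> nat \<Rightarrow> nat \<Rightarrow> nat set set \<Rightarrow> real mat" where
  "Yf k p m G = seidel_mat m G - (2*(real (binom (p+m-2) (int k - 2)) - real (binom (m-2) (int k - 2)))) \<cdot>\<^sub>m (ones_mat m m - 1\<^sub>m m)"

lemma Yf_index: "v < m \<Longrightarrow> w < m \<Longrightarrow> Yf k p m G $$ (v,w) = (if v = w then 0 else
   1 - 2 * real (card {e\<in>G. v\<in>e \<and> w\<in>e}) - 2*(real (binom (p+m-2) (int k - 2)) - real (binom (m-2) (int k - 2))))"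
  by (simp add: Yf_def seidel_index ones_mat_def)

lemma Yf_dim[simp]: "dim_row (Yf k p m G) = m" "dim_col (Yf k p m G) = m"
  by (simp_all add: Yf_def ones_mat_def)

lemma Yf_carrier[simp]: "Yf k p m G \<in> carrier_mat m m"
  by (rule carrier_matI) simp_all

definition A0m :: "nat \<Rightarrow> nat \<Rightarrow> real mat \<Rightarrow> real \<Rightarrow> real \<Rightarrow> real mat" where
  "A0m p t S0 a \<mu> = mat (p*t) (p*t) (\<lambda>(x,y). S0 $$ (x,y) - (if x div p = y div p \<and> x \<noteq> y then 2*a else 0) - (if x = y then \<mu> else 0))"
definition Bmat :: "nat \<Rightarrow> nat \<Rightarrow> nat \<Rightarrow> real \<Rightarrow> real mat" where
  "Bmat p t m b = mat (p*t) (p*t*m) (\<lambda>(x,y). 1 - (if x div p = y div m div p then 2*b else 0))"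
definition Cmat :: "nat \<Rightarrow> nat \<Rightarrow> nat \<Rightarrow> real \<Rightarrow> real mat" where
  "Cmat p t m b = mat (p*t*m) (p*t) (\<lambda>(x,y). 1 - (if y div p = x div m div p then 2*b else 0))"
definition Dmat :: "nat \<Rightarrow> nat \<Rightarrow> nat \<Rightarrow> (nat \<Rightarrow> real mat) \<Rightarrow> real \<Rightarrow> real mat" where
  "Dmat p t m Y \<mu> = mat (p*t*m) (p*t*m) (\<lambda>(x,y). if x div m = y div m then Y (x div m div p) $$ (x mod m, y mod m) - (if x = y then \<mu> else 0) else 1)"

lemma mats_carrier[simp]:
  "A0m p t S0 a \<mu> \<in> carrier_mat (p*t) (p*t)" "Bmat p t m b \<in> carrier_mat (p*t) (p*t*m)"
  "Cmat p t m b \<in> carrier_mat (p*t*m) (p*t)" "Dmat p t m Y \<mu> \<in> carrier_mat (p*t*m) (p*t*m)"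
  by (auto simp: A0m_def Bmat_def Cmat_def Dmat_def)

lemma mats_dim[simp]:
  "dim_row (A0m p t S0 a \<mu>) = p*t" "dim_col (A0m p t S0 a \<mu>) = p*t"
  "dim_row (Bmat p t m b) = p*t" "dim_col (Bmat p t m b) = p*t*m"
  "dim_row (Cmat p t m b) = p*t*m" "dim_col (Cmat p t m b) = p*t"
  "dim_row (Dmat p t m Y \<mu>) = p*t*m" "dim_col (Dmat p t m Y \<mu>) = p*t*m"
  by (auto simp: A0m_def Bmat_def Cmat_def Dmat_def)

context
  fixes k r p t m :: nat and E0 :: "nat set set" and Gs :: "nat \<Rightarrow> nat set set"
  assumes p1: "1 \<le> p" and m2: "2 \<le> m"
    and E0u: "uniform_hg k (p*t) E0"
    and Gsr: "\<forall>i<t. regular_hg k r m (Gs i)"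
begin

lemmas cnt_AA' = cnt_AA[OF p1 m2 E0u Gsr]
lemmas cnt_AB' = cnt_AB[OF p1 m2 E0u Gsr]
lemmas cnt_BB' = cnt_BB[OF p1 m2 E0u Gsr]

lemma corona_four:
  fixes \<mu> :: real
  defines "a \<equiv> (if 2 \<le> p then real p * (real (binom (p+m-2) (int k - 2)) - real (binom (p-2) (int k - 2))) else 0)"
    and "b \<equiv> real (binom (p+m-2) (int k - 2))"
  shows "seidel_mat (corona_size p t m) (corona_edges k p t m E0 Gs) - \<mu> \<cdot>\<^sub>m 1\<^sub>m (corona_size p t m)
     = four_block_mat (A0m p t (seidel_mat (p*t) E0) a \<mu>) (Bmat p t m b) (Cmat p t m b) (Dmat p t m (\<lambda>i. Yf k p m (Gs i)) \<mu>)"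
    (is "?L = ?R")
proof (rule eq_matI)
  let ?E = "corona_edges k p t m E0 Gs"
  have mp: "0 < m" "0 < p" using p1 m2 by auto
  show "dim_row ?L = dim_row ?R" "dim_col ?L = dim_col ?R"
    by (simp_all add: corona_size_def)
  fix x y assume "x < dim_row ?R" "y < dim_col ?R"
  then have x: "x < p*t + p*t*m" and y: "y < p*t + p*t*m" by auto
  have L: "?L $$ (x,y) = (if x = y then - \<mu> else 1 - 2 * real (card {e\<in>?E. x\<in>e \<and> y\<in>e}))"
    using x y by (simp add: seidel_index corona_size_def)
  have R: "?R $$ (x,y) = (if x < p*t then if y < p*t then A0m p t (seidel_mat (p*t) E0) a \<mu> $$ (x,y)
         else Bmat p t m b $$ (x, y - p*t) else if y < p*t then Cmat p t m b $$ (x - p*t, y)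
         else Dmat p t m (\<lambda>i. Yf k p m (Gs i)) \<mu> $$ (x - p*t, y - p*t))"
    using x y by (subst index_mat_four_block) auto
  show "?L $$ (x,y) = ?R $$ (x,y)"
  proof (cases "x < p*t")
    case xA: True
    show ?thesis
    proof (cases "y < p*t")
      case yA: True
      show ?thesis
      proof (cases "x = y")
        case True then show ?thesis unfolding L R using xA yA by (simp add: A0m_def seidel_index)
      next
        case False
        have "x div p = y div p \<Longrightarrow> 2 \<le> p"
        proof (rule ccontr)
          assume "x div p = y div p" "\<not> 2 \<le> p"
          then have "p = 1" using p1 by simp
          then show False using False \<open>x div p = y div p\<close> by simp
        qed
        then show ?thesis unfolding L R using xA yA False cnt_AA'[OF xA yA False]
          by (simp add: A0m_def seidel_index a_def algebra_simps)
      qed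
    next
      case yB: False
      have "x \<noteq> y" using xA yB by auto
      then show ?thesis unfolding L R using xA yB cnt_AB'[of x y] y
        by (simp add: Bmat_def b_def algebra_simps)
    qed
  next
    case xB: False
    show ?thesis
    proof (cases "y < p*t")
      case yA: True
      have "x \<noteq> y" using xB yA by auto
      moreover have "{e\<in>?E. x\<in>e \<and> y\<in>e} = {e\<in>?E. y\<in>e \<and> x\<in>e}" by blast
      ultimately show ?thesis unfolding L R using xB yA cnt_AB'[of y x] x
        by (simp add: Cmat_def b_def algebra_simps)
    next
      case yB: False
      have xd: "x - p*t < p*t*m" "y - p*t < p*t*m" using x y xB yB by auto
      show ?thesis
      proof (cases "x = y")
        case True then show ?thesis unfolding L R using xB yB xd mp
          by (simp add: Dmat_def Yf_index)
      next
        case False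
        have bt: "(x - p*t) div m div p < t" using blk_lt[OF p1 m2 E0u Gsr, of x] x xB
          by (simp add: div_lt_t)
        have neq: "(x - p*t) div m = (y - p*t) div m \<Longrightarrow> (x - p*t) mod m \<noteq> (y - p*t) mod m"
        proof
          assume "(x - p*t) div m = (y - p*t) div m" "(x - p*t) mod m = (y - p*t) mod m"
          then have "x - p*t = y - p*t" by (metis div_mult_mod_eq)
          then show False using False xB yB by simp
        qed
        have ne: "x - p*t \<noteq> y - p*t" using False xB yB by linarith
        show ?thesis unfolding L R using xB yB xd mp False cnt_BB'[of x y] x y neq ne
          by (simp add: Dmat_def Yf_index algebra_simps)
      qed
    qed
  qed
qed

end


lemma sum_blk1: "0 < p \<Longrightarrow> (\<Sum>b<p*t. (g::nat\<Rightarrow>real) (b div p)) = real p * (\<Sum>i<t. g i)"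
proof -
  assume p: "0 < p"
  have "(\<Sum>b<p*t. g (b div p)) = (\<Sum>i<t. \<Sum>v<p. g ((i*p+v) div p))"
    by (rule sum_split_blocks)
  also have "\<dots> = (\<Sum>i<t. real p * g i)" using p by simp
  finally show ?thesis by (simp add: sum_distrib_left)
qed

lemma sum_blk2: "0 < p \<Longrightarrow> 0 < m \<Longrightarrow> (\<Sum>x<p*t*m. (g::nat\<Rightarrow>real) (x div m div p)) = real (p*m) * (\<Sum>i<t. g i)"
proof -
  assume p: "0 < p" and m: "0 < m"
  have "(\<Sum>x<p*t*m. g (x div m div p)) = (\<Sum>x<m*(p*t). g (x div m div p))" by (simp add: mult.commute)
  also have "\<dots> = (\<Sum>b<p*t. \<Sum>v<m. g ((b*m+v) div m div p))"
    by (rule sum_split_blocks)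
  also have "\<dots> = (\<Sum>b<p*t. real m * g (b div p))" using m by simp
  also have "\<dots> = real m * (\<Sum>b<p*t. g (b div p))" by (simp add: sum_distrib_left)
  also have "\<dots> = real m * (real p * (\<Sum>i<t. g i))" using sum_blk1[OF p] by simp
  finally show ?thesis by simp
qed

lemma sum_if_eq: "c < n \<Longrightarrow> (\<Sum>b<n. (\<phi>::nat\<Rightarrow>real) b * (if b = c then A else B)) = B * (\<Sum>b<n. \<phi> b) + (A - B) * \<phi> c"
proof -
  assume c: "c < n"
  have "(\<Sum>b<n. \<phi> b * (if b = c then A else B)) = (\<Sum>b<n. B * \<phi> b + (if b = c then (A - B) * \<phi> b else 0))"
    by (intro sum.cong) (auto simp: algebra_simps)
  also have "\<dots> = B * (\<Sum>b<n. \<phi> b) + (A - B) * \<phi> c"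
    using c by (simp add: sum.distrib sum_distrib_left)
  finally show ?thesis .
qed

context
  fixes k r p t m :: nat and E0 :: "nat set set" and Gs :: "nat \<Rightarrow> nat set set"
  assumes p1: "1 \<le> p" and m2: "2 \<le> m"
    and E0u: "uniform_hg k (p*t) E0"
    and Gsr: "\<forall>i<t. regular_hg k r m (Gs i)"
begin

lemma Yf_rowsum:
  assumes i: "i < t" and v: "v < m"
  shows "(\<Sum>w<m. Yf k p m (Gs i) $$ (v,w)) = real m - 1 - 2 * real r * (real k - 1)
     - 2 * (real (binom (p+m-2) (int k - 2)) - real (binom (m-2) (int k - 2))) * (real m - 1)"
proof -
  let ?cc = "real (binom (p+m-2) (int k - 2)) - real (binom (m-2) (int k - 2))"
  have reg: "regular_hg k r m (Gs i)" using Gsr i by auto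
  have vm: "v \<in> {..<m}" using v by simp
  have "(\<Sum>w<m. Yf k p m (Gs i) $$ (v,w)) = Yf k p m (Gs i) $$ (v,v) + (\<Sum>w\<in>{..<m}-{v}. Yf k p m (Gs i) $$ (v,w))"
    by (rule sum.remove[OF _ vm]) simp
  also have "Yf k p m (Gs i) $$ (v,v) = 0" using v by (simp add: Yf_index)
  also have "(\<Sum>w\<in>{..<m}-{v}. Yf k p m (Gs i) $$ (v,w))
     = (\<Sum>w\<in>{..<m}-{v}. 1 - 2 * ?cc - 2 * real (card {e\<in>Gs i. v\<in>e \<and> w\<in>e}))"
    using v by (intro sum.cong refl) (auto simp: Yf_index)
  also have "\<dots> = real (m - 1) * (1 - 2 * ?cc) - 2 * (\<Sum>w\<in>{..<m}-{v}. real (card {e\<in>Gs i. v\<in>e \<and> w\<in>e}))"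
    using v by (simp add: sum_subtractf sum_distrib_left card_Diff_singleton)
  also have "(\<Sum>w\<in>{..<m}-{v}. real (card {e\<in>Gs i. v\<in>e \<and> w\<in>e})) = real r * (real k - 1)"
    by (rule regular_rowsum[OF reg v])
  finally show ?thesis using m2 by (simp add: of_nat_diff algebra_simps)
qed

end


lemma mult_entry: "A \<in> carrier_mat n q \<Longrightarrow> B \<in> carrier_mat q l \<Longrightarrow> i < n \<Longrightarrow> j < l \<Longrightarrow>
  (A * B) $$ (i,j) = (\<Sum>z<q. A $$ (i,z) * B $$ (z,j))"
  by (simp add: scalar_prod_def atLeast0LessThan)

lemma sum_blocks_m: "(\<Sum>z<p*t*m. (f::nat \<Rightarrow> real) z) = (\<Sum>b<p*t. \<Sum>v<m. f (b*m+v))"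
proof -
  have "(\<Sum>z<p*t*m. f z) = (\<Sum>z<m*(p*t). f z)" by (simp add: mult.commute)
  also have "\<dots> = (\<Sum>b<p*t. \<Sum>v<m. f (b*m+v))" by (rule sum_split_blocks)
  finally show ?thesis .
qed

definition Fblk :: "nat \<Rightarrow> nat \<Rightarrow> nat \<Rightarrow> (nat \<Rightarrow> nat set set) \<Rightarrow> real \<Rightarrow> nat \<Rightarrow> real mat" where
  "Fblk k p m Gs \<mu> b = Yf k p m (Gs (b div p)) - ones_mat m m - \<mu> \<cdot>\<^sub>m 1\<^sub>m m"

lemma Fblk_dim[simp]: "dim_row (Fblk k p m Gs \<mu> b) = m" "dim_col (Fblk k p m Gs \<mu> b) = m"
  by (simp_all add: Fblk_def)

lemma Fblk_carrier[simp]: "Fblk k p m Gs \<mu> b \<in> carrier_mat m m"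
  by (rule carrier_matI) simp_all

lemma Fblk_index: "v < m \<Longrightarrow> w < m \<Longrightarrow> Fblk k p m Gs \<mu> b $$ (v,w) = Yf k p m (Gs (b div p)) $$ (v,w) - 1 - (if v = w then \<mu> else 0)"
  by (simp add: Fblk_def)

context
  fixes k r p t m :: nat and E0 :: "nat set set" and Gs :: "nat \<Rightarrow> nat set set"
  assumes p1: "1 \<le> p" and m2: "2 \<le> m"
    and E0u: "uniform_hg k (p*t) E0"
    and Gsr: "\<forall>i<t. regular_hg k r m (Gs i)"
begin

lemmas Yf_rowsum' = Yf_rowsum[OF p1 m2 E0u Gsr]

lemma Dmat_eq: "Dmat p t m (\<lambda>i. Yf k p m (Gs i)) \<mu> = bdiag m (p*t) (Fblk k p m Gs \<mu>) + ones_mat (p*t*m) (p*t*m)"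
proof (rule eq_matI)
  have mp: "0 < m" "0 < p" using p1 m2 by auto
  fix x y assume "x < dim_row (bdiag m (p*t) (Fblk k p m Gs \<mu>) + ones_mat (p*t*m) (p*t*m))"
    "y < dim_col (bdiag m (p*t) (Fblk k p m Gs \<mu>) + ones_mat (p*t*m) (p*t*m))"
  then have x: "x < p*t*m" and y: "y < p*t*m" by auto
  have "x div m = y div m \<Longrightarrow> x mod m = y mod m \<longleftrightarrow> x = y" by (metis div_mult_mod_eq)
  then show "Dmat p t m (\<lambda>i. Yf k p m (Gs i)) \<mu> $$ (x, y) = (bdiag m (p*t) (Fblk k p m Gs \<mu>) + ones_mat (p*t*m) (p*t*m)) $$ (x, y)"
    using x y mp by (auto simp: Dmat_def bdiag_def Fblk_index)
qed (auto simp: Dmat_def bdiag_def)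

end


definition hval :: "nat \<Rightarrow> nat \<Rightarrow> nat \<Rightarrow> nat \<Rightarrow> real \<Rightarrow> real" where
  "hval k r p m \<mu> = - (1 + 2 * real r * (real k - 1) + 2 * (real (binom (p+m-2) (int k - 2)) - real (binom (m-2) (int k - 2))) * (real m - 1) + \<mu>)"

context
  fixes k r p t m :: nat and E0 :: "nat set set" and Gs :: "nat \<Rightarrow> nat set set"
  assumes p1: "1 \<le> p" and m2: "2 \<le> m"
    and E0u: "uniform_hg k (p*t) E0"
    and Gsr: "\<forall>i<t. regular_hg k r m (Gs i)"
begin

lemmas Yf_rowsum'' = Yf_rowsum[OF p1 m2 E0u Gsr]
lemmas Dmat_eq' = Dmat_eq[OF p1 m2 E0u Gsr]

lemma Fblk_rowsum: "b < p*t \<Longrightarrow> v < m \<Longrightarrow> (\<Sum>w<m. Fblk k p m Gs \<mu> b $$ (v,w)) = hval k r p m \<mu>"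
proof -
  assume b: "b < p*t" and v: "v < m"
  have bt: "b div p < t" using b div_lt_t by blast
  have "(\<Sum>w<m. Fblk k p m Gs \<mu> b $$ (v,w)) = (\<Sum>w<m. Yf k p m (Gs (b div p)) $$ (v,w) - 1 - (if v = w then \<mu> else 0))"
    by (intro sum.cong refl) (simp add: Fblk_index v)
  also have "\<dots> = (\<Sum>w<m. Yf k p m (Gs (b div p)) $$ (v,w)) - real m - \<mu>"
    using v by (simp add: sum_subtractf)
  finally show ?thesis using Yf_rowsum''[OF bt v] by (simp add: hval_def algebra_simps)
qed

lemma BD_J: "bdiag m (p*t) (Fblk k p m Gs \<mu>) * ones_mat (p*t*m) (p*t*m) = hval k r p m \<mu> \<cdot>\<^sub>m ones_mat (p*t*m) (p*t*m)"
proof (rule eq_matI)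
  have mp: "0 < m" "0 < p" using p1 m2 by auto
  fix x y assume "x < dim_row (hval k r p m \<mu> \<cdot>\<^sub>m ones_mat (p*t*m) (p*t*m))" "y < dim_col (hval k r p m \<mu> \<cdot>\<^sub>m ones_mat (p*t*m) (p*t*m))"
  then have x: "x < p*t*m" and y: "y < p*t*m" by auto
  have xb: "x div m < p*t" using x by (simp add: less_mult_imp_div_less)
  have "(bdiag m (p*t) (Fblk k p m Gs \<mu>) * ones_mat (p*t*m) (p*t*m)) $$ (x,y)
      = (\<Sum>z<p*t*m. bdiag m (p*t) (Fblk k p m Gs \<mu>) $$ (x,z) * ones_mat (p*t*m) (p*t*m) $$ (z,y))"
    by (rule mult_entry[of _ _ "p*t*m"]) (use x y in auto)
  also have "\<dots> = (\<Sum>b<p*t. \<Sum>v<m. bdiag m (p*t) (Fblk k p m Gs \<mu>) $$ (x,b*m+v) * ones_mat (p*t*m) (p*t*m) $$ (b*m+v,y))"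
    by (rule sum_blocks_m)
  also have "\<dots> = (\<Sum>b<p*t. if b = x div m then (\<Sum>v<m. Fblk k p m Gs \<mu> (x div m) $$ (x mod m, v)) else 0)"
  proof (intro sum.cong refl)
    fix b assume b: "b \<in> {..<p*t}"
    have bm: "b*m + v < p*t*m" if "v < m" for v
    proof -
      have "b*m + v < b*m + m" using that by simp
      also have "\<dots> = (b+1)*m" by simp
      also have "\<dots> \<le> (p*t)*m" using b by (intro mult_le_mono1) simp
      finally show ?thesis by simp
    qed
    show "(\<Sum>v<m. bdiag m (p*t) (Fblk k p m Gs \<mu>) $$ (x,b*m+v) * ones_mat (p*t*m) (p*t*m) $$ (b*m+v,y))
        = (if b = x div m then (\<Sum>v<m. Fblk k p m Gs \<mu> (x div m) $$ (x mod m, v)) else 0)"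
      using bm x y mp by (auto simp: bdiag_def intro!: sum.cong)
  qed
  also have "\<dots> = (\<Sum>v<m. Fblk k p m Gs \<mu> (x div m) $$ (x mod m, v))"
    using xb by simp
  also have "\<dots> = hval k r p m \<mu>" by (rule Fblk_rowsum) (use xb mp in auto)
  finally show "(bdiag m (p*t) (Fblk k p m Gs \<mu>) * ones_mat (p*t*m) (p*t*m)) $$ (x,y) = (hval k r p m \<mu> \<cdot>\<^sub>m ones_mat (p*t*m) (p*t*m)) $$ (x,y)"
    using x y by simp
qed auto

lemma det_Dmat:
  assumes h: "hval k r p m \<mu> \<noteq> 0"
  shows "det (Dmat p t m (\<lambda>i. Yf k p m (Gs i)) \<mu>) = (1 + real (p*t*m) / hval k r p m \<mu>) * (\<Prod>b<p*t. det (Fblk k p m Gs \<mu> b))"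
proof -
  let ?h = "hval k r p m \<mu>" and ?n = "p*t*m"
  let ?BD = "bdiag m (p*t) (Fblk k p m Gs \<mu>)" and ?J = "ones_mat ?n ?n"
  have BD: "?BD \<in> carrier_mat ?n ?n" by simp
  have "?BD * (1\<^sub>m ?n + (1 / ?h) \<cdot>\<^sub>m ?J) = ?BD * 1\<^sub>m ?n + ?BD * ((1 / ?h) \<cdot>\<^sub>m ?J)"
    by (rule mult_add_distrib_mat[OF BD]) auto
  also have "?BD * ((1 / ?h) \<cdot>\<^sub>m ?J) = (1 / ?h) \<cdot>\<^sub>m (?BD * ?J)"
    by (rule mult_smult_distrib[OF BD]) auto
  also have "\<dots> = ?J" unfolding BD_J using h by (intro eq_matI) auto
  also have "?BD * 1\<^sub>m ?n = ?BD" using BD by simp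
  finally have eq: "Dmat p t m (\<lambda>i. Yf k p m (Gs i)) \<mu> = ?BD * (1\<^sub>m ?n + (1 / ?h) \<cdot>\<^sub>m ?J)"
    using Dmat_eq' by simp
  have "det (?BD * (1\<^sub>m ?n + (1 / ?h) \<cdot>\<^sub>m ?J)) = det ?BD * det (1\<^sub>m ?n + (1 / ?h) \<cdot>\<^sub>m ?J)"
    by (rule det_mult[OF BD]) auto
  also have "det (1\<^sub>m ?n + (1 / ?h) \<cdot>\<^sub>m ?J) = 1 + real ?n / ?h" using det_one_plus_J by simp
  also have "det ?BD = (\<Prod>b<p*t. det (Fblk k p m Gs \<mu> b))"
    by (rule det_bdiag) (use m2 in auto)
  finally show ?thesis unfolding eq by simp
qed

end


definition Wm :: "nat \<Rightarrow> nat \<Rightarrow> nat \<Rightarrow> real \<Rightarrow> real \<Rightarrow> real mat" where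
  "Wm p t m \<alpha> \<beta> = mat (p*t*m) (p*t) (\<lambda>(z,w). \<alpha> + (if z div m div p = w div p then \<beta> else 0))"

lemma Wm_carrier[simp]: "Wm p t m \<alpha> \<beta> \<in> carrier_mat (p*t*m) (p*t)"
  and Wm_dim[simp]: "dim_row (Wm p t m \<alpha> \<beta>) = p*t*m" "dim_col (Wm p t m \<alpha> \<beta>) = p*t"
  by (auto simp: Wm_def)

lemma sum_ui_wi:
  assumes "ui < t" "wi < t"
  shows "(\<Sum>i<t. (1 - (if ui = i then 2*bb else 0)) * (\<alpha> + (if i = wi then \<beta> else 0)))
     = real t * \<alpha> + \<beta> - 2*bb*\<alpha> - (if ui = wi then 2*bb*\<beta> else 0)"
proof -
  have "(\<Sum>i<t. (1 - (if ui = i then 2*bb else 0)) * (\<alpha> + (if i = wi then \<beta> else 0)))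
      = (\<Sum>i<t. \<alpha> + (if i = wi then \<beta> else 0) - (if i = ui then 2*bb*\<alpha> else 0)
              - (if i = ui then (if i = wi then 2*bb*\<beta> else 0) else 0))"
    by (intro sum.cong refl) (auto simp: algebra_simps)
  also have "\<dots> = real t * \<alpha> + \<beta> - 2*bb*\<alpha> - (if ui = wi then 2*bb*\<beta> else 0)"
    using assms by (simp add: sum.distrib sum_subtractf)
  finally show ?thesis .
qed

context
  fixes k r p t m :: nat and E0 :: "nat set set" and Gs :: "nat \<Rightarrow> nat set set"
  assumes p1: "1 \<le> p" and m2: "2 \<le> m"
    and E0u: "uniform_hg k (p*t) E0"
    and Gsr: "\<forall>i<t. regular_hg k r m (Gs i)"
begin

lemmas Yf_rowsum3 = Yf_rowsum[OF p1 m2 E0u Gsr]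

lemma BW:
  assumes u: "u < p*t" and w: "w < p*t"
  shows "(Bmat p t m bb * Wm p t m \<alpha> \<beta>) $$ (u,w) = real (p*m) * (real t * \<alpha> + \<beta> - 2*bb*\<alpha> - (if u div p = w div p then 2*bb*\<beta> else 0))"
proof -
  have mp: "0 < m" "0 < p" using p1 m2 by auto
  have "(Bmat p t m bb * Wm p t m \<alpha> \<beta>) $$ (u,w) = (\<Sum>x<p*t*m. Bmat p t m bb $$ (u,x) * Wm p t m \<alpha> \<beta> $$ (x,w))"
    by (rule mult_entry[of _ _ "p*t*m"]) (use u w in auto)
  also have "\<dots> = (\<Sum>x<p*t*m. (\<lambda>i. (1 - (if u div p = i then 2*bb else 0)) * (\<alpha> + (if i = w div p then \<beta> else 0))) (x div m div p))"
    using u w by (intro sum.cong refl) (simp add: Bmat_def Wm_def)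
  also have "\<dots> = real (p*m) * (\<Sum>i<t. (1 - (if u div p = i then 2*bb else 0)) * (\<alpha> + (if i = w div p then \<beta> else 0)))"
    by (rule sum_blk2[OF mp(2,1)])
  also have "\<dots> = real (p*m) * (real t * \<alpha> + \<beta> - 2*bb*\<alpha> - (if u div p = w div p then 2*bb*\<beta> else 0))"
    using sum_ui_wi[of "u div p" t "w div p"] u w div_lt_t by simp
  finally show ?thesis .
qed

lemma DW:
  assumes ab: "\<alpha> * (hval k r p m \<mu> + real (p*t*m)) + real (p*m) * \<beta> = 1" "hval k r p m \<mu> * \<beta> = - 2 * bb"
  shows "Dmat p t m (\<lambda>i. Yf k p m (Gs i)) \<mu> * Wm p t m \<alpha> \<beta> = Cmat p t m bb"
proof (rule eq_matI)
  have mp: "0 < m" "0 < p" using p1 m2 by auto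
  let ?h = "hval k r p m \<mu>"
  fix x w assume "x < dim_row (Cmat p t m bb)" "w < dim_col (Cmat p t m bb)"
  then have x: "x < p*t*m" and w: "w < p*t" by auto
  have xb: "x div m < p*t" using x by (simp add: less_mult_imp_div_less)
  have wt: "w div p < t" using w div_lt_t by blast
  have xbt: "x div m div p < t" using xb div_lt_t by blast
  define \<phi> where "\<phi> b = \<alpha> + (if b div p = w div p then \<beta> else 0)" for b
  have "(Dmat p t m (\<lambda>i. Yf k p m (Gs i)) \<mu> * Wm p t m \<alpha> \<beta>) $$ (x,w)
     = (\<Sum>z<p*t*m. Dmat p t m (\<lambda>i. Yf k p m (Gs i)) \<mu> $$ (x,z) * Wm p t m \<alpha> \<beta> $$ (z,w))"
    by (rule mult_entry[of _ _ "p*t*m"]) (use x w in auto)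
  also have "\<dots> = (\<Sum>b<p*t. \<Sum>v<m. Dmat p t m (\<lambda>i. Yf k p m (Gs i)) \<mu> $$ (x,b*m+v) * Wm p t m \<alpha> \<beta> $$ (b*m+v,w))"
    by (rule sum_blocks_m)
  also have "\<dots> = (\<Sum>b<p*t. \<phi> b * (if b = x div m then ?h + real m else real m))"
  proof (intro sum.cong refl)
    fix b assume b: "b \<in> {..<p*t}"
    have bm: "b*m + v < p*t*m" if "v < m" for v
    proof -
      have "b*m + v < b*m + m" using that by simp
      also have "\<dots> = (b+1)*m" by simp
      also have "\<dots> \<le> (p*t)*m" using b by (intro mult_le_mono1) simp
      finally show ?thesis by simp
    qed
    have e1: "(\<Sum>v<m. Dmat p t m (\<lambda>i. Yf k p m (Gs i)) \<mu> $$ (x,b*m+v) * Wm p t m \<alpha> \<beta> $$ (b*m+v,w))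
        = \<phi> b * (\<Sum>v<m. Dmat p t m (\<lambda>i. Yf k p m (Gs i)) \<mu> $$ (x,b*m+v))"
      unfolding sum_distrib_left
      using bm w mp by (intro sum.cong refl) (auto simp: Wm_def \<phi>_def)
    have e2: "(\<Sum>v<m. Dmat p t m (\<lambda>i. Yf k p m (Gs i)) \<mu> $$ (x,b*m+v)) = (if b = x div m then ?h + real m else real m)"
    proof (cases "b = x div m")
      case True
      have xe: "x = b*m + v \<longleftrightarrow> v = x mod m" for v using True by (metis div_mult_mod_eq add_left_cancel mult.commute mod_mult_self3 mod_less mp(1) mod_less_divisor)
      have "(\<Sum>v<m. Dmat p t m (\<lambda>i. Yf k p m (Gs i)) \<mu> $$ (x,b*m+v))
          = (\<Sum>v<m. Yf k p m (Gs (x div m div p)) $$ (x mod m, v) - (if v = x mod m then \<mu> else 0))"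
        using bm x mp True xe by (intro sum.cong refl) (auto simp: Dmat_def)
      also have "\<dots> = (\<Sum>v<m. Yf k p m (Gs (x div m div p)) $$ (x mod m, v)) - \<mu>"
        using mp by (simp add: sum_subtractf)
      also have "\<dots> = ?h + real m" using Yf_rowsum3[OF xbt, of "x mod m"] mp by (simp add: hval_def algebra_simps)
      finally show ?thesis using True by simp
    next
      case False
      have "(\<Sum>v<m. Dmat p t m (\<lambda>i. Yf k p m (Gs i)) \<mu> $$ (x,b*m+v)) = (\<Sum>v<m. 1)"
        using bm x mp False by (intro sum.cong refl) (auto simp: Dmat_def)
      then show ?thesis using False by simp
    qed
    show "(\<Sum>v<m. Dmat p t m (\<lambda>i. Yf k p m (Gs i)) \<mu> $$ (x,b*m+v) * Wm p t m \<alpha> \<beta> $$ (b*m+v,w))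
        = \<phi> b * (if b = x div m then ?h + real m else real m)"
      unfolding e1 e2 ..
  qed
  also have "\<dots> = real m * (\<Sum>b<p*t. \<phi> b) + ?h * \<phi> (x div m)"
    by (subst sum_if_eq[OF xb]) simp
  also have "(\<Sum>b<p*t. \<phi> b) = real p * (\<Sum>i<t. \<alpha> + (if i = w div p then \<beta> else 0))"
    unfolding \<phi>_def by (rule sum_blk1) (use mp in auto)
  also have "(\<Sum>i<t. \<alpha> + (if i = w div p then \<beta> else 0)) = real t * \<alpha> + \<beta>"
    using wt by (simp add: sum.distrib)
  finally have "(Dmat p t m (\<lambda>i. Yf k p m (Gs i)) \<mu> * Wm p t m \<alpha> \<beta>) $$ (x,w)
     = real m * (real p * (real t * \<alpha> + \<beta>)) + ?h * \<phi> (x div m)" .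
  also have "\<dots> = 1 - (if w div p = x div m div p then 2 * bb else 0)"
    using ab unfolding \<phi>_def by (auto simp: algebra_simps)
  finally show "(Dmat p t m (\<lambda>i. Yf k p m (Gs i)) \<mu> * Wm p t m \<alpha> \<beta>) $$ (x,w) = Cmat p t m bb $$ (x,w)"
    using x w by (simp add: Cmat_def)
qed auto

end


lemma alg1: "(h::real) \<noteq> 0 \<Longrightarrow> h + s \<noteq> 0 \<Longrightarrow> ((h + 2*b*q)/(h*(h+s)))*(h+s) + q*(-2*b/h) = 1"
proof -
  assume h: "h \<noteq> 0" and hs: "h + s \<noteq> 0"
  have "((h + 2*b*q)/(h*(h+s)))*(h+s) = (h + 2*b*q)/h" using hs by simp
  also have "\<dots> + q*(-2*b/h) = (h + 2*b*q - 2*b*q)/h" by (simp add: diff_divide_distrib add_divide_distrib)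
  also have "\<dots> = 1" using h by simp
  finally show ?thesis .
qed
lemma alg2: "(h::real) \<noteq> 0 \<Longrightarrow> h + q*t \<noteq> 0 \<Longrightarrow>
  q * (t * ((h + 2*b*q)/(h*(h+q*t))) + (-2*b/h) - 2*b*((h + 2*b*q)/(h*(h+q*t))))
   = q / h * ((t - 4*b) - q * (t - 2*b)^2 / (h + q*t))"
proof -
  assume h: "h \<noteq> 0" and hs: "h + q*t \<noteq> 0"
  let ?D = "h*(h+q*t)"
  have D: "?D \<noteq> 0" using h hs by simp
  have l: "q * (t * ((h + 2*b*q)/?D) + (-2*b/h) - 2*b*((h + 2*b*q)/?D)) = q * ((t - 2*b)*(h + 2*b*q) - 2*b*(h+q*t)) / ?D"
  proof -
    define X where "X = (h + 2*b*q)/?D"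
    define Y where "Y = 2*b/h"
    have e: "Y = 2*b*(h+q*t)/?D" unfolding Y_def using hs by simp
    have "q * (t * X + (-2*b/h) - 2*b*X) = q * ((t - 2*b)*X - Y)" unfolding Y_def by (simp add: algebra_simps)
    also have "(t - 2*b)*X = ((t - 2*b)*(h + 2*b*q))/?D" unfolding X_def by (rule times_divide_eq_right)
    also have "\<dots> - Y = ((t - 2*b)*(h + 2*b*q) - 2*b*(h+q*t)) / ?D" unfolding e by (rule diff_divide_distrib[symmetric])
    also have "q * (((t - 2*b)*(h + 2*b*q) - 2*b*(h+q*t)) / ?D) = q * ((t - 2*b)*(h + 2*b*q) - 2*b*(h+q*t)) / ?D"
      by (rule times_divide_eq_right)
    finally show ?thesis unfolding X_def .
  qed
  have r: "q / h * ((t - 4*b) - q * (t - 2*b)^2 / (h + q*t)) = q * ((t - 4*b)*(h+q*t) - q*(t-2*b)^2) / ?D"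
    using h hs D by (simp add: field_simps)
  have "(t - 2*b)*(h + 2*b*q) - 2*b*(h+q*t) = (t - 4*b)*(h+q*t) - q*(t-2*b)^2"
    by (simp add: algebra_simps power2_eq_square)
  then show ?thesis using l r by simp
qed
theorem theorem3p3:
  fixes k r p t m :: nat and E0 :: "nat set set" and Gs :: "nat \<Rightarrow> nat set set"
    and \<mu> :: real
  assumes "1 \<le> p" and "2 \<le> m"
    and "uniform_hg k (p*t) E0"
    and "\<forall>i<t. regular_hg k r m (Gs i)"
  defines "a \<equiv> (if 2 \<le> p then real p * (real (binom (p+m-2) (int k - 2)) - real (binom (p-2) (int k - 2))) else 0)"
    and "b \<equiv> real (binom (p+m-2) (int k - 2))"
    and "c \<equiv> real (binom (p+m-2) (int k - 2)) - real (binom (m-2) (int k - 2))"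
    and "Y \<equiv> (\<lambda>i. seidel_mat m (Gs i) - (2*(real (binom (p+m-2) (int k - 2)) - real (binom (m-2) (int k - 2)))) \<cdot>\<^sub>m (ones_mat m m - 1\<^sub>m m))"
    and "h \<equiv> - (1 + 2 * real r * (real k - 1) + 2 * (real (binom (p+m-2) (int k - 2)) - real (binom (m-2) (int k - 2))) * (real m - 1) + \<mu>)"
  assumes "\<forall>i<t. invertible_mat (Y i - ones_mat m m - \<mu> \<cdot>\<^sub>m 1\<^sub>m m)"
    and "h \<noteq> 0" and "h + real (p*m*t) \<noteq> 0"
  shows "charP (seidel_mat (corona_size p t m) (corona_edges k p t m E0 Gs)) \<mu> =
    (1 + real (p*m*t) / h)
    * (\<Prod>i<t. det (Y i - ones_mat m m - \<mu> \<cdot>\<^sub>m 1\<^sub>m m)) ^ p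
    * det (seidel_mat (p*t) E0
           + kron (1\<^sub>m t) ((- (2*a + 4 * real (p*m) * b^2 / h)) \<cdot>\<^sub>m ones_mat p p + (2*a - \<mu>) \<cdot>\<^sub>m 1\<^sub>m p)
           - (real (p*m) / h * ((real t - 4*b) - real (p*m) * (real t - 2*b)^2 / (h + real (p*m*t)))) \<cdot>\<^sub>m ones_mat (p*t) (p*t))"
proof -
  let ?E = "corona_edges k p t m E0 Gs" and ?N = "corona_size p t m"
  let ?s = "real (p*t*m)"
  have mp: "0 < m" "0 < p" using assms(1,2) by auto
  have hv: "h = hval k r p m \<mu>" unfolding h_def hval_def ..
  have Yeq: "Y = (\<lambda>i. Yf k p m (Gs i))" unfolding Y_def Yf_def ..
  have sm: "real (p*m*t) = ?s" by (simp add: mult_ac)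
  have h0: "h \<noteq> 0" and hs0: "h + ?s \<noteq> 0" using assms(11,12) sm by (auto simp: mult_ac)
  have sq': "?s = real (p*m) * real t" by simp
  have hs0': "h + real (p*m) * real t \<noteq> 0" using hs0 sq' by (simp add: mult_ac)
  define \<alpha> where "\<alpha> = (h + 2*b*real (p*m)) / (h * (h + real (p*m) * real t))"
  define \<beta> where "\<beta> = - 2 * b / h"
  have ab1: "\<alpha> * (hval k r p m \<mu> + ?s) + real (p*m) * \<beta> = 1"
    unfolding hv[symmetric] \<alpha>_def \<beta>_def sq' using alg1[OF h0 hs0', of b "real (p*m)"] by simp
  have ab2: "hval k r p m \<mu> * \<beta> = - 2 * b" unfolding hv[symmetric] \<beta>_def using h0 by simp
  let ?A0 = "A0m p t (seidel_mat (p*t) E0) a \<mu>" and ?B = "Bmat p t m b" and ?C = "Cmat p t m b"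
  let ?D = "Dmat p t m (\<lambda>i. Yf k p m (Gs i)) \<mu>" and ?W = "Wm p t m \<alpha> \<beta>"
  have "charP (seidel_mat ?N ?E) \<mu> = det (seidel_mat ?N ?E - \<mu> \<cdot>\<^sub>m 1\<^sub>m ?N)"
    by (simp add: charP_def)
  also have "seidel_mat ?N ?E - \<mu> \<cdot>\<^sub>m 1\<^sub>m ?N = four_block_mat ?A0 ?B ?C ?D"
    unfolding a_def b_def by (rule corona_four[OF assms(1-4)])
  also have "det (four_block_mat ?A0 ?B ?C ?D) = det ?D * det (?A0 - ?B * ?W)"
    by (rule schur_like) (auto simp: DW[OF assms(1-4) ab1 ab2])
  also have "det ?D = (1 + ?s / h) * (\<Prod>b<p*t. det (Fblk k p m Gs \<mu> b))"
    unfolding hv by (rule det_Dmat[OF assms(1-4)]) (use h0 hv in simp)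
  also have "(\<Prod>b<p*t. det (Fblk k p m Gs \<mu> b)) = (\<Prod>i<t. det (Y i - ones_mat m m - \<mu> \<cdot>\<^sub>m 1\<^sub>m m)) ^ p"
  proof -
    have "(\<Prod>b<p*t. det (Fblk k p m Gs \<mu> b)) = (\<Prod>i<t. \<Prod>v<p. det (Fblk k p m Gs \<mu> (i*p+v)))"
      by (rule prod_split_blocks)
    also have "\<dots> = (\<Prod>i<t. det (Y i - ones_mat m m - \<mu> \<cdot>\<^sub>m 1\<^sub>m m) ^ p)"
      using mp by (intro prod.cong refl) (simp add: Fblk_def Yeq)
    finally show ?thesis by (simp add: prod_power_distrib)
  qed
  also have "?A0 - ?B * ?W = seidel_mat (p*t) E0
           + kron (1\<^sub>m t) ((- (2*a + 4 * real (p*m) * b^2 / h)) \<cdot>\<^sub>m ones_mat p p + (2*a - \<mu>) \<cdot>\<^sub>m 1\<^sub>m p)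
           - (real (p*m) / h * ((real t - 4*b) - real (p*m) * (real t - 2*b)^2 / (h + real (p*m*t)))) \<cdot>\<^sub>m ones_mat (p*t) (p*t)"
    (is "_ = ?T")
  proof (rule eq_matI)
    show "dim_row (?A0 - ?B * ?W) = dim_row ?T" "dim_col (?A0 - ?B * ?W) = dim_col ?T"
      by (simp_all add: kron_def)
    fix u w assume "u < dim_row ?T" "w < dim_col ?T"
    then have u: "u < p*t" and w: "w < p*t" by (auto simp: kron_def)
    have ud: "u div p < t" "w div p < t" using u w div_lt_t by blast+
    have uw: "u = w \<longleftrightarrow> u div p = w div p \<and> u mod p = w mod p" by (metis div_mult_mod_eq)
    have BW': "(?B * ?W) $$ (u,w) = real (p*m) * (real t * \<alpha> + \<beta> - 2*b*\<alpha> - (if u div p = w div p then 2*b*\<beta> else 0))"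
      by (rule BW[OF assms(1-4) u w])
    have L: "(?A0 - ?B * ?W) $$ (u,w) = seidel_mat (p*t) E0 $$ (u,w)
        - (if u div p = w div p \<and> u \<noteq> w then 2*a else 0) - (if u = w then \<mu> else 0)
        - real (p*m) * (real t * \<alpha> + \<beta> - 2*b*\<alpha> - (if u div p = w div p then 2*b*\<beta> else 0))"
      using u w BW' by (simp add: A0m_def)
    have R: "?T $$ (u,w) = seidel_mat (p*t) E0 $$ (u,w)
        + (if u div p = w div p then (- (2*a + 4 * real (p*m) * b^2 / h)) + (if u mod p = w mod p then 2*a - \<mu> else 0) else 0)
        - (real (p*m) / h * ((real t - 4*b) - real (p*m) * (real t - 2*b)^2 / (h + real (p*m*t))))"
      using u w ud mp by (simp add: kron_def mult.commute)
    have cst: "real (p*m) * (real t * \<alpha> + \<beta> - 2*b*\<alpha>) = real (p*m) / h * ((real t - 4*b) - real (p*m) * (real t - 2*b)^2 / (h + real (p*m*t)))"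
      unfolding \<alpha>_def \<beta>_def sm sq' using alg2[OF h0 hs0', of b] by simp
    have sq: "real (p*m) * (2*b*\<beta>) = - (4 * real (p*m) * b^2 / h)"
      unfolding \<beta>_def using h0 by (simp add: field_simps power2_eq_square)
    show "(?A0 - ?B * ?W) $$ (u,w) = ?T $$ (u,w)"
      unfolding L R using cst sq uw by (auto simp: algebra_simps)
  qed
  finally show ?thesis using sm by (simp add: mult_ac)
qed


end
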